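(* Let $F$ be a nontrivial finite group, $\tfrac12<p<1$, $\lambda=\frac{p}{1-p}$, $\alpha=\frac{\log|F|}{\log\lambda}$, and let $R_n=((L_n(i))_i,S_n)$ be the stationary random walk on $F\wr\mathbb{Z}$ with parameter $p$. Let $\rho_0=0$ and $\rho_k=\inf\{n>\rho_{k-1}:S_n=0\}$. Then there exist constants $k_0$ and $0<c\le C$ depending only on $p$ and $|F|$ such that for all integers $k\ge k_0$, \[\frac{c}{k^{2\alpha}}\le\Pr(R_{\rho_k}=\mathrm{id})\le\frac{C}{k^{2\alpha}}.\]
   Context: Elements of $F\wr\mathbb{Z}$ are pairs $((L(i))_{i\in\mathbb{Z}},x)$ with $L:\mathbb{Z}\to F$ finitely supported and $x\in\mathbb{Z}$; $\mathrm{id}$ has all lamps $\mathrm{id}_F$ and $x=0$. $(S_n)$ is the Markov chain on $\mathbb{Z}$ with $S_0=0$ and $\Pr(S_{n+1}=x+1\mid S_n=x)$ equal to $p,\tfrac12,1-p$ for $x<0,x=0,x>0$ respectively, and $\Pr(S_{n+1}=x-1\mid S_n=x)$ equal to $1-p,\tfrac12,p$ respectively. $(U_n,V_n)_{n\ge1}$ are i.i.d. pairs of independent uniform elements of $F$, independent of $(S_n)$; $L_0\equiv\mathrm{id}_F$, $L_{n+1}(i)=L_n(i)$ for $i\notin\{S_n,S_{n+1}\}$, $L_{n+1}(S_n)=U_{n+1}$, $L_{n+1}(S_{n+1})=V_{n+1}$. *)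

theory Defs
  imports "HOL-Probability.Probability" "HOL-Algebra.Group"
begin

text \<open>Randomness for step n+1: a coin C ~ Bernoulli(p), a fair coin D, and
  independent uniform elements U, V of the carrier of the lamp group.\<close>

definition step_pmf :: "real \<Rightarrow> ('a, 'b) monoid_scheme \<Rightarrow> (bool \<times> bool \<times> 'a \<times> 'a) pmf" where
  "step_pmf p G = pair_pmf (bernoulli_pmf p)
      (pair_pmf (bernoulli_pmf (1/2)) (pair_pmf (pmf_of_set (carrier G)) (pmf_of_set (carrier G))))"

definition walk_space :: "real \<Rightarrow> ('a, 'b) monoid_scheme \<Rightarrow> (bool \<times> bool \<times> 'a \<times> 'a) stream measure" where
  "walk_space p G = stream_space (measure_pmf (step_pmf p G))"

definition incr :: "int \<Rightarrow> bool \<Rightarrow> bool \<Rightarrow> int" where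
  "incr x c d = (if x < 0 then (if c then 1 else -1)
                 else if x > 0 then (if c then -1 else 1)
                 else (if d then 1 else -1))"

fun Spos :: "(bool \<times> bool \<times> 'a \<times> 'a) stream \<Rightarrow> nat \<Rightarrow> int" where
  "Spos \<omega> 0 = 0"
| "Spos \<omega> (Suc n) = (case \<omega> !! n of (c, d, u, v) \<Rightarrow> Spos \<omega> n + incr (Spos \<omega> n) c d)"

fun Lamps :: "('a, 'b) monoid_scheme \<Rightarrow> (bool \<times> bool \<times> 'a \<times> 'a) stream \<Rightarrow> nat \<Rightarrow> int \<Rightarrow> 'a" where
  "Lamps G \<omega> 0 = (\<lambda>i. \<one>\<^bsub>G\<^esub>)"
| "Lamps G \<omega> (Suc n) = (case \<omega> !! n of (c, d, u, v) \<Rightarrow>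
      ((Lamps G \<omega> n)(Spos \<omega> n := u))(Spos \<omega> (Suc n) := v))"

fun rho :: "(bool \<times> bool \<times> 'a \<times> 'a) stream \<Rightarrow> nat \<Rightarrow> enat" where
  "rho \<omega> 0 = 0"
| "rho \<omega> (Suc k) = Inf {enat m | m. rho \<omega> k < enat m \<and> Spos \<omega> m = 0}"

text \<open>R_n = id in the wreath product: all lamps identity and position 0.\<close>
definition is_id_at :: "('a, 'b) monoid_scheme \<Rightarrow> (bool \<times> bool \<times> 'a \<times> 'a) stream \<Rightarrow> nat \<Rightarrow> bool" where
  "is_id_at G \<omega> n \<longleftrightarrow> Lamps G \<omega> n = (\<lambda>i. \<one>\<^bsub>G\<^esub>) \<and> Spos \<omega> n = 0"

end

theory Submission
  imports Defs
begin

type_synonym st = "int \<times> int \<times> int \<times> nat"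

definition pu :: "real \<Rightarrow> int \<Rightarrow> real" where
  "pu p y = (if y < 0 then p else if y > 0 then 1 - p else 1/2)"

definition nextS :: "st \<Rightarrow> bool \<times> bool \<Rightarrow> st" where
  "nextS \<tau> cd = (case \<tau> of (y,lo,hi,c) \<Rightarrow> (case cd of (C,D) \<Rightarrow>
     (y + incr y C D, min lo (y + incr y C D), max hi (y + incr y C D),
      if y + incr y C D = 0 then Suc c else c)))"

definition upS :: "st \<Rightarrow> st" where
  "upS \<tau> = (case \<tau> of (y,lo,hi,c) \<Rightarrow> (y+1, min lo (y+1), max hi (y+1), if y+1 = 0 then Suc c else c))"

definition downS :: "st \<Rightarrow> st" where
  "downS \<tau> = (case \<tau> of (y,lo,hi,c) \<Rightarrow> (y-1, min lo (y-1), max hi (y-1), if y-1 = 0 then Suc c else c))"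

definition KS :: "real \<Rightarrow> (st \<Rightarrow> ennreal) \<Rightarrow> st \<Rightarrow> ennreal" where
  "KS p f \<tau> = (\<integral>\<^sup>+cd. f (nextS \<tau> cd) \<partial>measure_pmf (pair_pmf (bernoulli_pmf p) (bernoulli_pmf (1/2))))"

definition KSr :: "real \<Rightarrow> (st \<Rightarrow> real) \<Rightarrow> st \<Rightarrow> real" where
  "KSr p f \<tau> = pu p (fst \<tau>) * f (upS \<tau>) + (1 - pu p (fst \<tau>)) * f (downS \<tau>)"

definition closedS :: "st set \<Rightarrow> bool" where
  "closedS A \<longleftrightarrow> (\<forall>\<tau>\<in>A. upS \<tau> \<in> A \<and> downS \<tau> \<in> A)"

lemma ennreal_half_sum: "x * ennreal (1/2) + x * ennreal (1 - 1/2) = (x::ennreal)"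
proof -
  have "x * ennreal (1/2) + x * ennreal (1 - 1/2) = x * (ennreal (1/2) + ennreal (1/2))"
    by (simp add: distrib_left)
  also have "ennreal (1/2) + ennreal (1/2) = ennreal 1"
    by (subst ennreal_plus[symmetric]) auto
  finally show ?thesis by simp
qed

lemma ennreal_p_sum: "0 \<le> p \<Longrightarrow> p \<le> 1 \<Longrightarrow> x * ennreal p + x * ennreal (1 - p) = (x::ennreal)"
proof -
  assume "0 \<le> p" "p \<le> 1"
  have "x * ennreal p + x * ennreal (1 - p) = x * (ennreal p + ennreal (1 - p))"
    by (simp add: distrib_left)
  also have "ennreal p + ennreal (1-p) = ennreal 1"
    using \<open>0 \<le> p\<close> \<open>p \<le> 1\<close> by (subst ennreal_plus[symmetric]) auto
  finally show ?thesis by simp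
qed

lemma KS_explicit:
  assumes "0 \<le> p" "p \<le> 1"
  shows "KS p f \<tau> = ennreal (pu p (fst \<tau>)) * f (upS \<tau>) + ennreal (1 - pu p (fst \<tau>)) * f (downS \<tau>)"
proof -
  obtain y lo hi c where t: "\<tau> = (y,lo,hi,c)" by (cases \<tau>) auto
  have K: "KS p f \<tau> = (f (nextS \<tau> (True,True)) * ennreal (1/2) + f (nextS \<tau> (True,False)) * ennreal (1 - 1/2)) * ennreal p
     + (f (nextS \<tau> (False,True)) * ennreal (1/2) + f (nextS \<tau> (False,False)) * ennreal (1 - 1/2)) * ennreal (1 - p)"
    unfolding KS_def nn_integral_pair_pmf' using assms by simp
  consider "y < 0" | "y > 0" | "y = 0" by linarith
  then show ?thesis
  proof cases
    case 1
    have n: "nextS \<tau> (True,d) = upS \<tau>" "nextS \<tau> (False,d) = downS \<tau>" for d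
      using 1 by (auto simp: t nextS_def upS_def downS_def incr_def)
    show ?thesis unfolding K n ennreal_half_sum using 1 by (simp add: t pu_def mult.commute)
  next
    case 2
    have n: "nextS \<tau> (True,d) = downS \<tau>" "nextS \<tau> (False,d) = upS \<tau>" for d
      using 2 by (auto simp: t nextS_def upS_def downS_def incr_def)
    show ?thesis unfolding K n ennreal_half_sum using 2 by (simp add: t pu_def mult.commute add.commute)
  next
    case 3
    have n: "nextS \<tau> (d,True) = upS \<tau>" "nextS \<tau> (d,False) = downS \<tau>" for d
      using 3 by (auto simp: t nextS_def upS_def downS_def incr_def)
    show ?thesis unfolding K n using 3 assms
      by (simp only: ennreal_p_sum t pu_def fst_conv) (simp add: mult.commute)
  qed
qed


locale rw =
  fixes p :: real
  assumes p_gt: "1/2 < p" and p_lt: "p < 1"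
begin

lemma p01: "0 \<le> p" "p \<le> 1" using p_gt p_lt by auto

lemma pu01: "0 \<le> pu p y" "pu p y \<le> 1" "0 \<le> 1 - pu p y"
  using p01 by (auto simp: pu_def)

lemma Kexp: "KS p f \<tau> = ennreal (pu p (fst \<tau>)) * f (upS \<tau>) + ennreal (1 - pu p (fst \<tau>)) * f (downS \<tau>)"
  using KS_explicit p01 by blast

lemma K_mono_on:
  assumes "closedS A" "\<tau> \<in> A" "\<And>\<tau>'. \<tau>' \<in> A \<Longrightarrow> f \<tau>' \<le> g \<tau>'"
  shows "KS p f \<tau> \<le> KS p g \<tau>"
  using assms unfolding Kexp closedS_def by (intro add_mono mult_left_mono) auto

lemma K_cong_on:
  assumes "closedS A" "\<tau> \<in> A" "\<And>\<tau>'. \<tau>' \<in> A \<Longrightarrow> f \<tau>' = g \<tau>'"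
  shows "KS p f \<tau> = KS p g \<tau>"
  using assms unfolding Kexp closedS_def by auto

lemma K_add: "KS p (\<lambda>\<tau>. f \<tau> + g \<tau>) \<tau> = KS p f \<tau> + KS p g \<tau>"
  unfolding Kexp by (simp add: distrib_left add_ac)

lemma K_cmult: "KS p (\<lambda>\<tau>. a * f \<tau>) \<tau> = a * KS p f \<tau>"
  unfolding Kexp by (simp add: distrib_left mult_ac)

lemma K_zero: "KS p (\<lambda>_. 0) \<tau> = 0"
  unfolding Kexp by simp

lemma K_sum: "KS p (\<lambda>\<tau>. \<Sum>i\<in>I. F i \<tau>) \<tau> = (\<Sum>i\<in>I. KS p (F i) \<tau>)"
proof (cases "finite I")
  case True
  then show ?thesis
    by (induction I rule: finite_induct) (simp_all add: K_zero K_add)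
qed (simp add: K_zero)

lemma K_suminf: "KS p (\<lambda>\<tau>. \<Sum>i. F i \<tau>) \<tau> = (\<Sum>i. KS p (F i) \<tau>)"
  unfolding Kexp by (subst suminf_add[symmetric]) (auto intro: summableI)

lemma K_ennreal:
  assumes "0 \<le> f (upS \<tau>)" "0 \<le> f (downS \<tau>)"
  shows "KS p (\<lambda>\<tau>. ennreal (f \<tau>)) \<tau> = ennreal (KSr p f \<tau>)"
proof -
  let ?a = "pu p (fst \<tau>)"
  have "ennreal (KSr p f \<tau>) = ennreal (?a * f (upS \<tau>)) + ennreal ((1 - ?a) * f (downS \<tau>))"
    unfolding KSr_def using assms pu01 by (intro ennreal_plus) auto
  also have "\<dots> = ennreal ?a * ennreal (f (upS \<tau>)) + ennreal (1 - ?a) * ennreal (f (downS \<tau>))"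
    using assms pu01 by (simp add: ennreal_mult)
  finally show ?thesis unfolding Kexp by simp
qed

lemma Kn_Suc: "(KS p ^^ Suc n) f = KS p ((KS p ^^ n) f)"
  by simp

lemma Kn_cong_on:
  assumes "closedS A" "\<And>\<tau>. \<tau> \<in> A \<Longrightarrow> f \<tau> = g \<tau>"
  shows "\<tau> \<in> A \<Longrightarrow> (KS p ^^ n) f \<tau> = (KS p ^^ n) g \<tau>"
proof (induction n arbitrary: \<tau>)
  case 0 then show ?case using assms by simp
next
  case (Suc n)
  show ?case unfolding Kn_Suc by (rule K_cong_on[OF assms(1) Suc.prems Suc.IH])
qed

lemma Kn_mono_on:
  assumes "closedS A" "\<And>\<tau>. \<tau> \<in> A \<Longrightarrow> f \<tau> \<le> g \<tau>"
  shows "\<tau> \<in> A \<Longrightarrow> (KS p ^^ n) f \<tau> \<le> (KS p ^^ n) g \<tau>"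
proof (induction n arbitrary: \<tau>)
  case 0 then show ?case using assms by simp
next
  case (Suc n)
  show ?case unfolding Kn_Suc by (rule K_mono_on[OF assms(1) Suc.prems Suc.IH])
qed

lemma Kn_sum: "(KS p ^^ n) (\<lambda>\<tau>. \<Sum>i\<in>I. F i \<tau>) \<tau> = (\<Sum>i\<in>I. (KS p ^^ n) (F i) \<tau>)"
proof (induction n arbitrary: \<tau>)
  case (Suc n)
  have "(KS p ^^ n) (\<lambda>\<tau>. \<Sum>i\<in>I. F i \<tau>) = (\<lambda>\<tau>. \<Sum>i\<in>I. (KS p ^^ n) (F i) \<tau>)"
    using Suc by auto
  then show ?case unfolding Kn_Suc by (simp add: K_sum)
qed simp

lemma super_bound:
  assumes A: "closedS A" and sup: "\<And>\<tau>. \<tau> \<in> A \<Longrightarrow> \<Psi> \<tau> + KS p h \<tau> \<le> h \<tau>" and t: "\<tau> \<in> A"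
  shows "(\<Sum>n. (KS p ^^ n) \<Psi> \<tau>) \<le> h \<tau>"
proof -
  have "\<forall>\<tau>\<in>A. (\<Sum>n<N. (KS p ^^ n) \<Psi> \<tau>) \<le> h \<tau>" for N
  proof (induction N)
    case 0 then show ?case by simp
  next
    case (Suc N)
    show ?case
    proof
      fix \<tau> assume t: "\<tau> \<in> A"
      have "(\<Sum>n<Suc N. (KS p ^^ n) \<Psi> \<tau>) = \<Psi> \<tau> + (\<Sum>n<N. KS p ((KS p ^^ n) \<Psi>) \<tau>)"
        unfolding sum.lessThan_Suc_shift by simp
      also have "\<dots> = \<Psi> \<tau> + KS p (\<lambda>\<tau>'. \<Sum>n<N. (KS p ^^ n) \<Psi> \<tau>') \<tau>"
        by (simp add: K_sum)
      also have "\<dots> \<le> \<Psi> \<tau> + KS p h \<tau>"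
        using Suc.IH by (intro add_left_mono K_mono_on[OF A t]) auto
      also have "\<dots> \<le> h \<tau>" using sup t by blast
      finally show "(\<Sum>n<Suc N. (KS p ^^ n) \<Psi> \<tau>) \<le> h \<tau>" .
    qed
  qed
  then show ?thesis using t by (intro suminf_le_const summableI) auto
qed

lemma sub_bound:
  assumes A: "closedS A" and sub: "\<And>\<tau>. \<tau> \<in> A \<Longrightarrow> h \<tau> \<le> \<Psi> \<tau> + KS p h \<tau>" and t: "\<tau> \<in> A"
    and fin: "(\<Sum>N. (KS p ^^ N) h \<tau>) \<noteq> \<top>"
  shows "h \<tau> \<le> (\<Sum>n. (KS p ^^ n) \<Psi> \<tau>)"
proof -
  have main: "\<forall>\<tau>\<in>A. h \<tau> \<le> (\<Sum>n<N. (KS p ^^ n) \<Psi> \<tau>) + (KS p ^^ N) h \<tau>" for N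
  proof (induction N)
    case 0 then show ?case by simp
  next
    case (Suc N)
    show ?case
    proof
      fix \<tau> assume t: "\<tau> \<in> A"
      have "h \<tau> \<le> \<Psi> \<tau> + KS p h \<tau>" using sub t by blast
      also have "\<dots> \<le> \<Psi> \<tau> + KS p (\<lambda>\<tau>'. (\<Sum>n<N. (KS p ^^ n) \<Psi> \<tau>') + (KS p ^^ N) h \<tau>') \<tau>"
        using Suc.IH by (intro add_left_mono K_mono_on[OF A t]) auto
      also have "\<dots> = \<Psi> \<tau> + (\<Sum>n<N. (KS p ^^ Suc n) \<Psi> \<tau>) + (KS p ^^ Suc N) h \<tau>"
        by (simp add: K_add K_sum add.assoc)
      also have "\<dots> = (\<Sum>n<Suc N. (KS p ^^ n) \<Psi> \<tau>) + (KS p ^^ Suc N) h \<tau>"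
        unfolding sum.lessThan_Suc_shift by simp
      finally show "h \<tau> \<le> (\<Sum>n<Suc N. (KS p ^^ n) \<Psi> \<tau>) + (KS p ^^ Suc N) h \<tau>" .
    qed
  qed
  define a where "a N = (KS p ^^ N) h \<tau>" for N
  have atop: "a N \<noteq> \<top>" for N
    using fin ennreal_suminf_lessD[of a \<top> N] unfolding a_def by (auto simp: top.not_eq_extremum)
  define r where "r N = enn2real (a N)" for N
  have ar: "a N = ennreal (r N)" for N using atop unfolding r_def by (simp add: ennreal_enn2real_if)
  have "summable r"
  proof (rule summable_suminf_not_top)
    show "0 \<le> r N" for N by (simp add: r_def)
    have "(\<Sum>i. ennreal (r i)) = (\<Sum>i. a i)" using ar by simp
    then show "(\<Sum>i. ennreal (r i)) \<noteq> \<top>" using fin by (simp add: a_def)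
  qed
  then have r0: "r \<longlonglongrightarrow> 0" by (rule summable_LIMSEQ_zero)
  show ?thesis
  proof (rule ennreal_le_epsilon)
    fix e :: real assume "0 < e"
    from LIMSEQ_D[OF r0 \<open>0 < e\<close>] obtain N where "norm (r N - 0) < e"
      by blast
    then have "r N \<le> e" by simp
    have "h \<tau> \<le> (\<Sum>n<N. (KS p ^^ n) \<Psi> \<tau>) + ennreal (r N)"
      using main t ar unfolding a_def by metis
    also have "\<dots> \<le> (\<Sum>n. (KS p ^^ n) \<Psi> \<tau>) + ennreal e"
      using \<open>r N \<le> e\<close> by (intro add_mono sum_le_suminf summableI ennreal_leI) auto
    finally show "h \<tau> \<le> (\<Sum>n. (KS p ^^ n) \<Psi> \<tau>) + ennreal e" .
  qed
qed

end

definition reflS :: "st \<Rightarrow> st" where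
  "reflS \<tau> = (case \<tau> of (y,lo,hi,c) \<Rightarrow> (-y, -hi, -lo, c))"

definition A0 :: "st set" where
  "A0 = {(y,lo,hi,c). lo \<le> 0 \<and> 0 \<le> hi \<and> lo \<le> y \<and> y \<le> hi}"

lemma closed_A0: "closedS A0"
  unfolding closedS_def A0_def upS_def downS_def by auto

lemma reflS_A0: "\<tau> \<in> A0 \<Longrightarrow> reflS \<tau> \<in> A0"
  unfolding A0_def reflS_def by auto

lemma reflS_reflS[simp]: "reflS (reflS \<tau>) = \<tau>"
  unfolding reflS_def by (auto split: prod.splits)

lemma upS_reflS: "upS (reflS \<tau>) = reflS (downS \<tau>)"
  unfolding upS_def downS_def reflS_def by (auto split: prod.splits)

lemma downS_reflS: "downS (reflS \<tau>) = reflS (upS \<tau>)"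
  unfolding upS_def downS_def reflS_def by (auto split: prod.splits)

lemma pu_neg: "pu p (-y) = 1 - pu p y"
  unfolding pu_def by auto

lemma KSr_reflS: "KSr p f (reflS \<tau>) = KSr p (\<lambda>\<tau>. f (reflS \<tau>)) \<tau>"
proof -
  have "fst (reflS \<tau>) = - fst \<tau>" unfolding reflS_def by (auto split: prod.splits)
  then show ?thesis
    unfolding KSr_def upS_reflS downS_reflS by (simp add: pu_neg algebra_simps)
qed

context rw
begin

definition lam :: real where "lam = p / (1 - p)"

lemma lam_gt1: "lam > 1"
  using p_gt p_lt unfolding lam_def by (simp add: field_simps)

lemma lam_id1: "(1 - p) * lam = p"
  using p_lt unfolding lam_def by simp

lemma lam_id2: "p + (1 - p) * lam^2 = lam"
proof -
  have "p + (1 - p) * lam^2 = p + p * lam" using lam_id1 by (simp add: power2_eq_square mult.assoc[symmetric])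
  also have "\<dots> = lam" using p_lt unfolding lam_def by (simp add: field_simps)
  finally show ?thesis .
qed

definition phi :: "nat \<Rightarrow> int \<Rightarrow> real" where
  "phi m z = (lam^(m+1) - lam^(nat z)) / (lam^(m+1) - 1)"

definition gam :: "nat \<Rightarrow> real" where "gam m = phi m 1"
definition bet :: "nat \<Rightarrow> real" where "bet m = (1 + gam m) / 2"

lemma lam_pow_gt1: "lam^(Suc m) > 1"
  by (rule one_less_power) (use lam_gt1 in auto)

lemma phi_0[simp]: "phi m 0 = 1"
  using lam_pow_gt1[of m] unfolding phi_def by simp

lemma phi_top: "phi m (int m + 1) = 0"
  unfolding phi_def by (simp add: nat_add_distrib)

lemma phi_harm:
  assumes "z \<ge> 1"
  shows "p * phi m (z-1) + (1-p) * phi m (z+1) = phi m z"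
proof -
  define L where "L = lam^(nat (z-1))"
  have n1: "nat z = Suc (nat (z-1))" using assms by simp
  have n2: "nat (z+1) = Suc (Suc (nat (z-1)))" using assms by simp
  have e1: "lam^(nat z) = L * lam" unfolding L_def n1 by (simp add: power_Suc2)
  have e2: "lam^(nat (z+1)) = L * lam^2" unfolding L_def n2 by (simp add: power_Suc2 power2_eq_square mult.assoc)
  define T where "T = lam^(m+1)"
  have T1: "T - 1 > 0" using lam_pow_gt1[of m] unfolding T_def by simp
  have "p * phi m (z-1) + (1-p) * phi m (z+1) = (p * (T - L) + (1-p) * (T - L * lam^2)) / (T - 1)"
  proof -
    have "phi m (z-1) = (T - L) / (T - 1)" unfolding phi_def T_def L_def by simp
    moreover have "phi m (z+1) = (T - L * lam^2) / (T - 1)" unfolding phi_def T_def e2 by simp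
    ultimately show ?thesis by (simp add: add_divide_distrib)
  qed
  also have "p * (T - L) + (1-p) * (T - L * lam^2) = T - L * (p + (1-p) * lam^2)"
    by (simp add: algebra_simps)
  also have "\<dots> = T - L * lam" using lam_id2 by simp
  finally show ?thesis unfolding phi_def T_def[symmetric] e1 by simp
qed

lemma phi_nonneg: "0 \<le> z \<Longrightarrow> z \<le> int m + 1 \<Longrightarrow> 0 \<le> phi m z"
proof -
  assume "0 \<le> z" "z \<le> int m + 1"
  then have "nat z \<le> m + 1" by linarith
  then have "lam^(nat z) \<le> lam^(m+1)" using lam_gt1 by (intro power_increasing) auto
  then show ?thesis unfolding phi_def using lam_pow_gt1[of m] by (intro divide_nonneg_pos) auto
qed

lemma phi_le1: "phi m z \<le> 1"
proof -
  have "1 \<le> lam^(nat z)" using lam_gt1 by (intro one_le_power) auto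
  then show ?thesis unfolding phi_def using lam_pow_gt1[of m] by (simp add: field_simps)
qed

lemma gam01: "0 \<le> gam m" "gam m \<le> 1"
  unfolding gam_def using phi_nonneg[of 1 m] phi_le1 by auto

lemma gam_0: "gam 0 = 0"
  unfolding gam_def phi_def by simp

lemma bet01: "0 \<le> bet m" "bet m \<le> 1"
  unfolding bet_def using gam01[of m] by auto

end

lemma KSr_lin: "KSr p (\<lambda>\<tau>. a * (f \<tau> + g \<tau>)) \<tau> = a * (KSr p f \<tau> + KSr p g \<tau>)"
  unfolding KSr_def by (simp add: algebra_simps)

context rw
begin

lemma KSr_nonneg: "0 \<le> f (upS \<tau>) \<Longrightarrow> 0 \<le> f (downS \<tau>) \<Longrightarrow> 0 \<le> KSr p f \<tau>"
  unfolding KSr_def using pu01 by simp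

lemma lift_super:
  assumes A: "closedS A" and f0: "\<And>\<tau>. \<tau> \<in> A \<Longrightarrow> 0 \<le> f \<tau>" and g0: "\<And>\<tau>. \<tau> \<in> A \<Longrightarrow> 0 \<le> g \<tau>"
    and sup: "\<And>\<tau>. \<tau> \<in> A \<Longrightarrow> g \<tau> + KSr p f \<tau> \<le> f \<tau>" and t: "\<tau> \<in> A"
  shows "ennreal (g \<tau>) + KS p (\<lambda>\<tau>. ennreal (f \<tau>)) \<tau> \<le> ennreal (f \<tau>)"
proof -
  have s: "upS \<tau> \<in> A" "downS \<tau> \<in> A" using A t unfolding closedS_def by auto
  have "KS p (\<lambda>\<tau>. ennreal (f \<tau>)) \<tau> = ennreal (KSr p f \<tau>)"
    using s f0 by (intro K_ennreal) auto
  moreover have "0 \<le> KSr p f \<tau>" using s f0 by (intro KSr_nonneg) auto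
  ultimately show ?thesis using g0[OF t] sup[OF t]
    by (simp add: ennreal_plus[symmetric] del: ennreal_plus)
qed

lemma lift_sub:
  assumes A: "closedS A" and f0: "\<And>\<tau>. \<tau> \<in> A \<Longrightarrow> 0 \<le> f \<tau>" and g0: "\<And>\<tau>. \<tau> \<in> A \<Longrightarrow> 0 \<le> g \<tau>"
    and sub: "\<And>\<tau>. \<tau> \<in> A \<Longrightarrow> f \<tau> \<le> g \<tau> + KSr p f \<tau>" and t: "\<tau> \<in> A"
  shows "ennreal (f \<tau>) \<le> ennreal (g \<tau>) + KS p (\<lambda>\<tau>. ennreal (f \<tau>)) \<tau>"
proof -
  have s: "upS \<tau> \<in> A" "downS \<tau> \<in> A" using A t unfolding closedS_def by auto
  have "KS p (\<lambda>\<tau>. ennreal (f \<tau>)) \<tau> = ennreal (KSr p f \<tau>)"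
    using s f0 by (intro K_ennreal) auto
  moreover have "0 \<le> KSr p f \<tau>" using s f0 by (intro KSr_nonneg) auto
  ultimately show ?thesis using g0[OF t] sub[OF t]
    by (simp add: ennreal_plus[symmetric] del: ennreal_plus)
qed

end

locale rwk = rw +
  fixes k :: nat and q :: real
  assumes k1: "1 \<le> k" and q0: "0 < q" and q1: "q \<le> 1"
begin

definition Psir :: "st \<Rightarrow> real" where
  "Psir \<tau> = (case \<tau> of (y,lo,hi,c) \<Rightarrow> if c = k \<and> y = 0 then q ^ nat (hi - lo + 1) else 0)"

definition hl :: "nat \<Rightarrow> st \<Rightarrow> real" where
  "hl m \<tau> = (case \<tau> of (y,lo,hi,c) \<Rightarrow>
     if - int m \<le> lo \<and> hi \<le> int m then
       (if c < k then q^(2*m+1) * gam m ^ (k-c-1) * (if y = 0 then gam m else phi m \<bar>y\<bar>)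
        else if c = k \<and> y = 0 then q^(2*m+1) else 0)
     else 0)"

lemma Psir_refl: "Psir (reflS \<tau>) = Psir \<tau>"
  unfolding Psir_def reflS_def by (auto split: prod.splits simp: algebra_simps)

lemma Psir_nonneg: "0 \<le> Psir \<tau>"
  unfolding Psir_def using q0 by (auto split: prod.splits)

lemma hl_refl: "hl m (reflS \<tau>) = hl m \<tau>"
  unfolding hl_def reflS_def by (auto split: prod.splits)

lemma hl_nonneg: "\<tau> \<in> A0 \<Longrightarrow> 0 \<le> hl m \<tau>"
  unfolding hl_def A0_def using q0 gam01[of m] phi_nonneg[of "\<bar>fst \<tau>\<bar>" m]
  by (auto split: prod.splits)

lemma hl_lt: "- int m \<le> lo \<Longrightarrow> hi \<le> int m \<Longrightarrow> c < k \<Longrightarrow>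
   hl m (y,lo,hi,c) = q^(2*m+1) * gam m ^ (k-c-1) * (if y = 0 then gam m else phi m \<bar>y\<bar>)"
  unfolding hl_def by simp

lemma hl_Suc: "- int m \<le> lo \<Longrightarrow> hi \<le> int m \<Longrightarrow> c < k \<Longrightarrow>
   hl m (0,lo,hi,Suc c) = q^(2*m+1) * gam m ^ (k-c-1)"
proof -
  assume a: "- int m \<le> lo" "hi \<le> int m" "c < k"
  show ?thesis
  proof (cases "Suc c < k")
    case True
    then have "k - c - 1 = Suc (k - Suc c - 1)" by simp
    then show ?thesis using a True unfolding hl_def by (simp add: mult.assoc mult.commute[of "gam m"])
  next
    case False
    then have "k = Suc c" using a by simp
    then show ?thesis using a unfolding hl_def by simp
  qed
qed

lemma hl_out: "\<not> (- int m \<le> lo \<and> hi \<le> int m) \<Longrightarrow> hl m (y,lo,hi,c) = 0"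
  unfolding hl_def by (simp only: prod.case if_False)

lemma hl_sub_pos:
  assumes m1: "1 \<le> m" and t: "\<tau> \<in> A0" and y0: "fst \<tau> \<ge> 0"
  shows "hl m \<tau> \<le> Psir \<tau> + KSr p (hl m) \<tau>"
proof -
  obtain y lo hi c where tt: "\<tau> = (y,lo,hi,c)" by (cases \<tau>) auto
  have inA: "lo \<le> 0" "0 \<le> hi" "lo \<le> y" "y \<le> hi" using t unfolding tt A0_def by auto
  have y0: "y \<ge> 0" using y0 tt by simp
  have s: "upS \<tau> \<in> A0" "downS \<tau> \<in> A0" using closed_A0 t unfolding closedS_def by auto
  have K0: "0 \<le> KSr p (hl m) \<tau>" using s by (intro KSr_nonneg hl_nonneg)
  define Q where "Q = q^(2*m+1)"
  show ?thesis
  proof (cases "- int m \<le> lo \<and> hi \<le> int m")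
    case False
    then show ?thesis using K0 Psir_nonneg[of \<tau>] by (simp add: tt hl_out)
  next
    case band: True
    consider "c > k" | "c = k \<and> y \<noteq> 0" | "c = k \<and> y = 0" | "c < k \<and> y = 0" | "c < k \<and> y > 0"
      using y0 by linarith
    then show ?thesis
    proof cases
      case 1 then show ?thesis using K0 Psir_nonneg[of \<tau>] by (simp add: tt hl_def)
    next
      case 2 then show ?thesis using K0 Psir_nonneg[of \<tau>] by (simp add: tt hl_def)
    next
      case 3
      have "nat (hi - lo + 1) \<le> 2*m+1" using band by linarith
      then have "q^(2*m+1) \<le> q ^ nat (hi - lo + 1)" using q0 q1 by (intro power_decreasing) auto
      then show ?thesis using 3 K0 band by (simp add: tt hl_def Psir_def)
    next
      case 4
      have up: "upS \<tau> = (1, lo, max hi 1, c)" using 4 inA by (simp add: tt upS_def)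
      have dn: "downS \<tau> = (-1, min lo (-1), hi, c)" using 4 inA by (simp add: tt downS_def)
      have "hl m (upS \<tau>) = Q * gam m ^ (k-c-1) * gam m"
        unfolding up Q_def using band m1 4 by (subst hl_lt) (auto simp: gam_def)
      moreover have "hl m (downS \<tau>) = Q * gam m ^ (k-c-1) * gam m"
        unfolding dn Q_def using band m1 4 by (subst hl_lt) (auto simp: gam_def)
      moreover have "hl m \<tau> = Q * gam m ^ (k-c-1) * gam m"
        unfolding tt Q_def using band 4 by (subst hl_lt) auto
      ultimately show ?thesis using Psir_nonneg[of \<tau>] unfolding KSr_def by (simp add: algebra_simps)
    next
      case 5
      define G where "G = gam m ^ (k-c-1)"
      have up: "upS \<tau> = (y+1, lo, max hi (y+1), c)" using 5 inA by (simp add: tt upS_def)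
      have dn: "downS \<tau> = (y-1, lo, hi, if y - 1 = 0 then Suc c else c)" using 5 inA by (simp add: tt downS_def)
      have hup: "hl m (upS \<tau>) = Q * G * phi m (y+1)"
      proof (cases "y + 1 \<le> int m")
        case True
        then show ?thesis unfolding up Q_def G_def using band 5 by (subst hl_lt) auto
      next
        case False
        then have "y = int m" using band inA by linarith
        then show ?thesis unfolding up using False by (simp add: hl_out phi_top)
      qed
      have hdn: "hl m (downS \<tau>) = Q * G * phi m (y-1)"
      proof (cases "y = 1")
        case True
        then show ?thesis unfolding dn Q_def G_def using band 5 by (simp add: hl_Suc)
      next
        case False
        then show ?thesis unfolding dn Q_def G_def using band 5 by (subst hl_lt) auto
      qed
      have ht: "hl m \<tau> = Q * G * phi m y"
        unfolding tt Q_def G_def using band 5 by (subst hl_lt) auto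
      have pu: "pu p (fst \<tau>) = 1 - p" using 5 by (simp add: tt pu_def)
      have "KSr p (hl m) \<tau> = Q * G * (p * phi m (y-1) + (1-p) * phi m (y+1))"
        unfolding KSr_def pu hup hdn by (simp add: algebra_simps)
      also have "\<dots> = hl m \<tau>" using phi_harm[of y m] 5 ht by simp
      finally show ?thesis using Psir_nonneg[of \<tau>] by simp
    qed
  qed
qed

lemma hl_sub:
  assumes m1: "1 \<le> m" and t: "\<tau> \<in> A0"
  shows "hl m \<tau> \<le> Psir \<tau> + KSr p (hl m) \<tau>"
proof (cases "fst \<tau> \<ge> 0")
  case True then show ?thesis using hl_sub_pos[OF m1 t] by simp
next
  case False
  have "fst (reflS \<tau>) \<ge> 0" using False unfolding reflS_def by (auto split: prod.splits)
  then have "hl m (reflS \<tau>) \<le> Psir (reflS \<tau>) + KSr p (hl m) (reflS \<tau>)"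
    using hl_sub_pos[OF m1 reflS_A0[OF t]] by simp
  also have "KSr p (hl m) (reflS \<tau>) = KSr p (hl m) \<tau>"
    unfolding KSr_reflS hl_refl ..
  finally show ?thesis unfolding hl_refl Psir_refl .
qed

definition hp :: "nat \<Rightarrow> st \<Rightarrow> real" where
  "hp m \<tau> = (case \<tau> of (y,lo,hi,c) \<Rightarrow>
     if hi \<le> int m then
       (if c < k then bet m ^ (k-c-1) * (if y = 0 then bet m else if y > 0 then phi m y else 1)
        else if c = k \<and> y = 0 then 1 else 0)
     else 0)"

definition Psp :: "nat \<Rightarrow> st \<Rightarrow> real" where
  "Psp m \<tau> = (case \<tau> of (y,lo,hi,c) \<Rightarrow> if c = k \<and> y = 0 \<and> hi \<le> int m then 1 else 0)"

lemma hp_nonneg: "\<tau> \<in> A0 \<Longrightarrow> 0 \<le> hp m \<tau>"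
  unfolding hp_def A0_def using bet01[of m] phi_nonneg[of "fst \<tau>" m]
  by (auto split: prod.splits)

lemma Psp_nonneg: "0 \<le> Psp m \<tau>"
  unfolding Psp_def by (auto split: prod.splits)

lemma hp_lt: "hi \<le> int m \<Longrightarrow> c < k \<Longrightarrow>
   hp m (y,lo,hi,c) = bet m ^ (k-c-1) * (if y = 0 then bet m else if y > 0 then phi m y else 1)"
  unfolding hp_def by simp

lemma hp_Suc: "hi \<le> int m \<Longrightarrow> c < k \<Longrightarrow> hp m (0,lo,hi,Suc c) = bet m ^ (k-c-1)"
proof -
  assume a: "hi \<le> int m" "c < k"
  show ?thesis
  proof (cases "Suc c < k")
    case True
    then have "k - c - 1 = Suc (k - Suc c - 1)" by simp
    then show ?thesis using a True unfolding hp_def by (simp add: mult.commute[of "bet m"])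
  next
    case False
    then have "k = Suc c" using a by simp
    then show ?thesis using a unfolding hp_def by simp
  qed
qed

lemma hp_out: "\<not> hi \<le> int m \<Longrightarrow> hp m (y,lo,hi,c) = 0"
  unfolding hp_def by (simp only: prod.case if_False)

lemma hp_super:
  assumes t: "\<tau> \<in> A0"
  shows "Psp m \<tau> + KSr p (hp m) \<tau> \<le> hp m \<tau>"
proof -
  obtain y lo hi c where tt: "\<tau> = (y,lo,hi,c)" by (cases \<tau>) auto
  have inA: "lo \<le> 0" "0 \<le> hi" "lo \<le> y" "y \<le> hi" using t unfolding tt A0_def by auto
  show ?thesis
  proof (cases "hi \<le> int m")
    case False
    have "hp m (upS \<tau>) = 0" "hp m (downS \<tau>) = 0" "hp m \<tau> = 0" "Psp m \<tau> = 0"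
      using False by (auto simp: tt upS_def downS_def hp_def Psp_def)
    then show ?thesis by (simp add: KSr_def)
  next
    case band: True
    consider "c > k" | "c = k" | "c < k \<and> y = 0" | "c < k \<and> y > 0" | "c < k \<and> y < 0"
      by linarith
    then show ?thesis
    proof cases
      case 1
      have "hp m (upS \<tau>) = 0" "hp m (downS \<tau>) = 0" "hp m \<tau> = 0" "Psp m \<tau> = 0"
        using 1 by (auto simp: tt upS_def downS_def hp_def Psp_def)
      then show ?thesis by (simp add: KSr_def)
    next
      case 2
      have "hp m (upS \<tau>) = 0" "hp m (downS \<tau>) = 0"
        using 2 by (auto simp: tt upS_def downS_def hp_def)
      moreover have "Psp m \<tau> \<le> hp m \<tau>"
        using 2 band by (auto simp: tt hp_def Psp_def)
      ultimately show ?thesis by (simp add: KSr_def)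
    next
      case 3
      define B where "B = bet m ^ (k-c-1)"
      have up: "upS \<tau> = (1, lo, max hi 1, c)" using 3 inA by (simp add: tt upS_def)
      have dn: "downS \<tau> = (-1, min lo (-1), hi, c)" using 3 inA by (simp add: tt downS_def)
      have hup: "hp m (upS \<tau>) = B * gam m"
      proof (cases "m = 0")
        case True
        then show ?thesis unfolding up using inA by (simp add: hp_out gam_0)
      next
        case False
        then show ?thesis unfolding up B_def using band 3 by (subst hp_lt) (auto simp: gam_def)
      qed
      have hdn: "hp m (downS \<tau>) = B" unfolding dn B_def using band 3 by (subst hp_lt) auto
      have ht: "hp m \<tau> = B * bet m" unfolding tt B_def using band 3 by (subst hp_lt) auto
      have "Psp m \<tau> = 0" using 3 by (simp add: tt Psp_def)
      moreover have "KSr p (hp m) \<tau> = B * bet m"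
        unfolding KSr_def hup hdn using 3 by (simp add: tt pu_def bet_def algebra_simps)
      ultimately show ?thesis using ht by simp
    next
      case 4
      define B where "B = bet m ^ (k-c-1)"
      have up: "upS \<tau> = (y+1, lo, max hi (y+1), c)" using 4 inA by (simp add: tt upS_def)
      have dn: "downS \<tau> = (y-1, lo, hi, if y - 1 = 0 then Suc c else c)" using 4 inA by (simp add: tt downS_def)
      have hup: "hp m (upS \<tau>) = B * phi m (y+1)"
      proof (cases "y + 1 \<le> int m")
        case True
        then show ?thesis unfolding up B_def using band 4 by (subst hp_lt) auto
      next
        case False
        then have "y = int m" using band inA by linarith
        then show ?thesis unfolding up using False by (simp add: hp_out phi_top)
      qed
      have hdn: "hp m (downS \<tau>) = B * phi m (y-1)"
      proof (cases "y = 1")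
        case True
        then show ?thesis unfolding dn B_def using band 4 by (simp add: hp_Suc)
      next
        case False
        then show ?thesis unfolding dn B_def using band 4 by (subst hp_lt) auto
      qed
      have ht: "hp m \<tau> = B * phi m y" unfolding tt B_def using band 4 by (subst hp_lt) auto
      have pu: "pu p (fst \<tau>) = 1 - p" using 4 by (simp add: tt pu_def)
      have "KSr p (hp m) \<tau> = B * (p * phi m (y-1) + (1-p) * phi m (y+1))"
        unfolding KSr_def pu hup hdn by (simp add: algebra_simps)
      also have "\<dots> = hp m \<tau>" using phi_harm[of y m] 4 ht by simp
      finally show ?thesis using 4 by (simp add: tt Psp_def)
    next
      case 5
      define B where "B = bet m ^ (k-c-1)"
      have up: "upS \<tau> = (y+1, lo, hi, if y + 1 = 0 then Suc c else c)" using 5 inA by (simp add: tt upS_def)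
      have dn: "downS \<tau> = (y-1, min lo (y-1), hi, c)" using 5 inA by (simp add: tt downS_def)
      have hup: "hp m (upS \<tau>) = B"
      proof (cases "y = -1")
        case True
        then show ?thesis unfolding up B_def using band 5 by (simp add: hp_Suc)
      next
        case False
        then show ?thesis unfolding up B_def using band 5 by (subst hp_lt) auto
      qed
      have hdn: "hp m (downS \<tau>) = B" unfolding dn B_def using band 5 by (subst hp_lt) auto
      have ht: "hp m \<tau> = B" unfolding tt B_def using band 5 by (subst hp_lt) auto
      have "KSr p (hp m) \<tau> = B" unfolding KSr_def hup hdn by (simp add: algebra_simps)
      then show ?thesis using 5 ht by (simp add: tt Psp_def)
    qed
  qed
qed

lemma hm_super:
  assumes t: "\<tau> \<in> A0"
  shows "Psp m (reflS \<tau>) + KSr p (\<lambda>\<tau>. hp m (reflS \<tau>)) \<tau> \<le> hp m (reflS \<tau>)"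
  using hp_super[OF reflS_A0[OF t], of m] unfolding KSr_reflS .

definition del :: real where "del = 2 * p - 1"
definition Aw :: real where "Aw = 1 + 1 / del"

lemma del_pos: "del > 0" using p_gt unfolding del_def by simp

definition wL :: "st \<Rightarrow> real" where
  "wL \<tau> = (case \<tau> of (y,lo,hi,c) \<Rightarrow> if c < k then Aw * real (k - c) + (if y = 0 then Aw else \<bar>y\<bar> / del) else 0)"

definition vL :: "st \<Rightarrow> real" where
  "vL \<tau> = (case \<tau> of (y,lo,hi,c) \<Rightarrow> if c < k then 1 else if c = k \<and> y = 0 then 1 else 0)"

lemma Aw_pos: "Aw > 0"
proof -
  have "1 / del > 0" using del_pos by simp
  then show ?thesis unfolding Aw_def by linarith
qed

lemma wL_nonneg: "0 \<le> wL \<tau>"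
  unfolding wL_def using Aw_pos del_pos by (auto split: prod.splits)

lemma vL_nonneg: "0 \<le> vL \<tau>" "vL \<tau> \<le> 1"
  unfolding vL_def by (auto split: prod.splits)

lemma wL_refl: "wL (reflS \<tau>) = wL \<tau>"
  unfolding wL_def reflS_def by (auto split: prod.splits)

lemma wL_super_pos:
  assumes y0: "fst \<tau> \<ge> 0"
  shows "(if snd (snd (snd \<tau>)) < k then 1 else 0) + KSr p wL \<tau> \<le> wL \<tau>"
proof -
  obtain y lo hi c where tt: "\<tau> = (y,lo,hi,c)" by (cases \<tau>) auto
  have y0: "y \<ge> 0" using y0 tt by simp
  show ?thesis
  proof (cases "c < k")
    case False
    have "wL (upS \<tau>) = 0" "wL (downS \<tau>) = 0" "wL \<tau> = 0"
      using False by (auto simp: tt upS_def downS_def wL_def)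
    then show ?thesis using False by (simp add: KSr_def tt)
  next
    case ck: True
    show ?thesis
    proof (cases "y = 0")
      case True
      have "wL (upS \<tau>) = Aw * real (k - c) + 1 / del" "wL (downS \<tau>) = Aw * real (k - c) + 1 / del"
        using True ck by (auto simp: tt upS_def downS_def wL_def)
      moreover have "wL \<tau> = Aw * real (k - c) + Aw" using True ck by (simp add: tt wL_def)
      ultimately show ?thesis using ck True by (simp add: KSr_def tt pu_def Aw_def algebra_simps)
    next
      case False
      then have yp: "y > 0" using y0 by simp
      have up: "wL (upS \<tau>) = Aw * real (k - c) + (y+1) / del"
        using yp ck by (auto simp: tt upS_def wL_def)
      have dn: "wL (downS \<tau>) \<le> Aw * real (k - c) + (y-1) / del"
      proof (cases "y = 1")
        case True
        show ?thesis
        proof (cases "Suc c < k")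
          case True
          then have "real (k - c) = real (k - Suc c) + 1" by linarith
          then show ?thesis using \<open>y = 1\<close> True by (simp add: tt downS_def wL_def algebra_simps)
        next
          case False
          then show ?thesis using \<open>y = 1\<close> Aw_pos by (simp add: tt downS_def wL_def)
        qed
      next
        case False
        then show ?thesis using yp ck by (simp add: tt downS_def wL_def)
      qed
      have ht: "wL \<tau> = Aw * real (k - c) + y / del" using yp ck by (simp add: tt wL_def)
      have pu: "pu p (fst \<tau>) = 1 - p" using yp by (simp add: tt pu_def)
      have "KSr p wL \<tau> = (1 - p) * wL (upS \<tau>) + p * wL (downS \<tau>)"
        unfolding KSr_def pu by simp
      also have "\<dots> \<le> (1 - p) * (Aw * real (k - c) + (y+1) / del) + p * (Aw * real (k - c) + (y-1) / del)"
        unfolding up using dn p01 by (intro add_left_mono mult_left_mono) auto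
      also have "\<dots> = Aw * real (k - c) + ((1-p)*(y+1) + p*(y-1)) / del"
        using del_pos by (simp add: field_simps)
      also have "(1-p)*(y+1) + p*(y-1) = y - del" by (simp add: del_def algebra_simps)
      also have "Aw * real (k - c) + (y - del) / del = Aw * real (k - c) + y / del - 1"
        using del_pos by (simp add: diff_divide_distrib)
      finally show ?thesis using ht ck by (simp add: tt)
    qed
  qed
qed

lemma wL_super: "(if snd (snd (snd \<tau>)) < k then 1 else 0) + KSr p wL \<tau> \<le> wL \<tau>"
proof (cases "fst \<tau> \<ge> 0")
  case True then show ?thesis by (rule wL_super_pos)
next
  case False
  have "fst (reflS \<tau>) \<ge> 0" "snd (snd (snd (reflS \<tau>))) = snd (snd (snd \<tau>))"
    using False unfolding reflS_def by (auto split: prod.splits)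
  then show ?thesis using wL_super_pos[of "reflS \<tau>"] unfolding KSr_reflS wL_refl by simp
qed

lemma vL_super: "(if snd (snd (snd \<tau>)) = k \<and> fst \<tau> = 0 then 1 else 0) + KSr p vL \<tau> \<le> vL \<tau>"
proof -
  obtain y lo hi c where tt: "\<tau> = (y,lo,hi,c)" by (cases \<tau>) auto
  consider "c < k" | "c = k \<and> y = 0" | "c = k \<and> y \<noteq> 0" | "c > k" by linarith
  then show ?thesis
  proof cases
    case 1
    have "KSr p vL \<tau> \<le> pu p (fst \<tau>) * 1 + (1 - pu p (fst \<tau>)) * 1"
      unfolding KSr_def using vL_nonneg pu01 by (intro add_mono mult_left_mono) auto
    then show ?thesis using 1 by (simp add: tt vL_def)
  next
    case 2
    have "vL (upS \<tau>) = 0" "vL (downS \<tau>) = 0" using 2 by (auto simp: tt upS_def downS_def vL_def)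
    then show ?thesis using 2 by (simp add: KSr_def tt vL_def)
  next
    case 3
    have "vL (upS \<tau>) = 0" "vL (downS \<tau>) = 0" using 3 by (auto simp: tt upS_def downS_def vL_def)
    then show ?thesis using 3 by (simp add: KSr_def tt vL_def)
  next
    case 4
    have "vL (upS \<tau>) = 0" "vL (downS \<tau>) = 0" using 4 by (auto simp: tt upS_def downS_def vL_def)
    then show ?thesis using 4 by (simp add: KSr_def tt vL_def)
  qed
qed

definition WL :: "nat \<Rightarrow> st \<Rightarrow> real" where
  "WL m \<tau> = q^(2*m+1) * (wL \<tau> + vL \<tau>)"

lemma hl_bound: "\<tau> \<in> A0 \<Longrightarrow>
  hl m \<tau> \<le> q^(2*m+1) * ((if snd (snd (snd \<tau>)) < k then 1 else 0) + (if snd (snd (snd \<tau>)) = k \<and> fst \<tau> = 0 then 1 else 0))"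
proof -
  assume t: "\<tau> \<in> A0"
  obtain y lo hi c where tt: "\<tau> = (y,lo,hi,c)" by (cases \<tau>) auto
  have q0': "0 \<le> q^(2*m+1)" using q0 by simp
  show ?thesis
  proof (cases "- int m \<le> lo \<and> hi \<le> int m")
    case False
    then show ?thesis using q0' by (simp add: tt hl_out)
  next
    case True
    then have "\<bar>y\<bar> \<le> int m + 1" using t by (auto simp: tt A0_def)
    then have "gam m ^ (k-c-1) * (if y = 0 then gam m else phi m \<bar>y\<bar>) \<le> 1 * 1"
      using gam01[of m] phi_le1[of m "\<bar>y\<bar>"] phi_nonneg[of "\<bar>y\<bar>" m]
      by (intro mult_mono power_le_one) auto
    then have "q^(2*m+1) * (gam m ^ (k-c-1) * (if y = 0 then gam m else phi m \<bar>y\<bar>)) \<le> q^(2*m+1) * 1"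
      using q0' by (intro mult_left_mono) auto
    then show ?thesis using q0' True unfolding hl_def tt
      by (auto simp: mult.assoc)
  qed
qed

lemma WL_super: "\<tau> \<in> A0 \<Longrightarrow> hl m \<tau> + KSr p (WL m) \<tau> \<le> WL m \<tau>"
proof -
  assume t: "\<tau> \<in> A0"
  have "KSr p (WL m) \<tau> = q^(2*m+1) * (KSr p wL \<tau> + KSr p vL \<tau>)"
    unfolding WL_def by (rule KSr_lin)
  moreover have "0 \<le> q^(2*m+1)" using q0 by simp
  ultimately show ?thesis
    using hl_bound[OF t, of m] wL_super[of \<tau>] vL_super[of \<tau>]
    unfolding WL_def by (smt (verit) distrib_left mult_left_mono)
qed

end

context rwk
begin

definition uS :: "st \<Rightarrow> ennreal" where
  "uS \<tau> = (\<Sum>n. (KS p ^^ n) (\<lambda>\<tau>. ennreal (Psir \<tau>)) \<tau>)"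

definition Hs :: "st \<Rightarrow> ennreal" where
  "Hs \<tau> = (\<Sum>m. ennreal (q^(2*m+1) * (hp m \<tau> + hp m (reflS \<tau>))))"

lemma Psir_bound:
  assumes t: "\<tau> \<in> A0"
  shows "ennreal (Psir \<tau>) \<le> (\<Sum>m. ennreal (q^(2*m+1) * (Psp m \<tau> + Psp m (reflS \<tau>))))"
proof -
  obtain y lo hi c where tt: "\<tau> = (y,lo,hi,c)" by (cases \<tau>) auto
  have inA: "lo \<le> 0" "0 \<le> hi" using t by (auto simp: tt A0_def)
  define m0 where "m0 = nat (min hi (-lo))"
  have "Psir \<tau> \<le> q^(2*m0+1) * (Psp m0 \<tau> + Psp m0 (reflS \<tau>))"
  proof (cases "c = k \<and> y = 0")
    case True
    have "2*m0+1 \<le> nat (hi - lo + 1)" unfolding m0_def using inA by linarith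
    then have "q ^ nat (hi - lo + 1) \<le> q^(2*m0+1)" using q0 q1 by (intro power_decreasing) auto
    moreover have "1 \<le> Psp m0 \<tau> + Psp m0 (reflS \<tau>)"
      using True inA unfolding Psp_def tt reflS_def m0_def by auto
    moreover have "0 \<le> q^(2*m0+1)" using q0 by simp
    ultimately show ?thesis using True unfolding Psir_def tt
      by (simp add: order_trans[OF _ mult_left_mono[of 1]])
  next
    case False
    have "Psir \<tau> = 0" using False by (auto simp: tt Psir_def)
    moreover have "0 \<le> q^(2*m0+1) * (Psp m0 \<tau> + Psp m0 (reflS \<tau>))"
      using q0 Psp_nonneg by (intro mult_nonneg_nonneg add_nonneg_nonneg) auto
    ultimately show ?thesis by simp
  qed
  then have "ennreal (Psir \<tau>) \<le> ennreal (q^(2*m0+1) * (Psp m0 \<tau> + Psp m0 (reflS \<tau>)))"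
    by (rule ennreal_leI)
  also have "\<dots> \<le> (\<Sum>m. ennreal (q^(2*m+1) * (Psp m \<tau> + Psp m (reflS \<tau>))))"
    using sum_le_suminf[OF summableI, of "{m0}" "\<lambda>m. ennreal (q^(2*m+1) * (Psp m \<tau> + Psp m (reflS \<tau>)))"]
    by simp
  finally show ?thesis .
qed

lemma Hs_super:
  assumes t: "\<tau> \<in> A0"
  shows "ennreal (Psir \<tau>) + KS p Hs \<tau> \<le> Hs \<tau>"
proof -
  define F where "F m \<tau> = q^(2*m+1) * (hp m \<tau> + hp m (reflS \<tau>))" for m \<tau>
  define P where "P m \<tau> = q^(2*m+1) * (Psp m \<tau> + Psp m (reflS \<tau>))" for m \<tau>
  have s: "upS \<tau> \<in> A0" "downS \<tau> \<in> A0" using closed_A0 t unfolding closedS_def by auto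
  have Fnn: "\<sigma> \<in> A0 \<Longrightarrow> 0 \<le> F m \<sigma>" for m \<sigma>
    unfolding F_def using q0 hp_nonneg[of \<sigma> m] hp_nonneg[OF reflS_A0, of \<sigma> m] by simp
  have "KS p Hs \<tau> = (\<Sum>m. KS p (\<lambda>\<tau>. ennreal (F m \<tau>)) \<tau>)"
    unfolding Hs_def F_def by (rule K_suminf)
  also have "\<dots> = (\<Sum>m. ennreal (KSr p (F m) \<tau>))"
    using s Fnn by (intro suminf_cong K_ennreal) auto
  finally have KH: "KS p Hs \<tau> = (\<Sum>m. ennreal (KSr p (F m) \<tau>))" .
  have "ennreal (Psir \<tau>) + KS p Hs \<tau> \<le> (\<Sum>m. ennreal (P m \<tau>)) + (\<Sum>m. ennreal (KSr p (F m) \<tau>))"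
    using Psir_bound[OF t] unfolding KH P_def by (rule add_right_mono)
  also have "\<dots> = (\<Sum>m. ennreal (P m \<tau>) + ennreal (KSr p (F m) \<tau>))"
    by (rule suminf_add[OF summableI summableI])
  also have "\<dots> \<le> (\<Sum>m. ennreal (F m \<tau>))"
  proof (intro suminf_le summableI)
    fix m
    have P0: "0 \<le> P m \<tau>" unfolding P_def using q0 Psp_nonneg[of m] by simp
    have K0: "0 \<le> KSr p (F m) \<tau>" using s Fnn by (intro KSr_nonneg) auto
    have "P m \<tau> + KSr p (F m) \<tau>
        = q^(2*m+1) * ((Psp m \<tau> + KSr p (hp m) \<tau>) + (Psp m (reflS \<tau>) + KSr p (\<lambda>\<tau>. hp m (reflS \<tau>)) \<tau>))"
      unfolding P_def F_def KSr_lin by (simp add: algebra_simps)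
    also have "\<dots> \<le> q^(2*m+1) * (hp m \<tau> + hp m (reflS \<tau>))"
      using q0 hp_super[OF t, of m] hm_super[OF t, of m] by (intro mult_left_mono add_mono) auto
    finally show "ennreal (P m \<tau>) + ennreal (KSr p (F m) \<tau>) \<le> ennreal (F m \<tau>)"
      using P0 K0 unfolding F_def by (simp add: ennreal_plus[symmetric] del: ennreal_plus)
  qed
  finally show ?thesis unfolding Hs_def F_def .
qed

lemma tau0_A0: "(0,0,0,0) \<in> A0" unfolding A0_def by simp

lemma upper_uS: "uS (0,0,0,0) \<le> (\<Sum>m. ennreal (2 * q^(2*m+1) * bet m ^ k))"
proof -
  have "uS (0,0,0,0) \<le> Hs (0,0,0,0)"
    unfolding uS_def by (rule super_bound[OF closed_A0 Hs_super tau0_A0])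
  also have "Hs (0,0,0,0) = (\<Sum>m. ennreal (2 * q^(2*m+1) * bet m ^ k))"
  proof -
    have "hp m (0,0,0,0) = bet m ^ k" for m
      using k1 unfolding hp_def by (simp add: power_Suc2[symmetric])
    moreover have "reflS (0,0,0,0) = (0,0,0,0)" unfolding reflS_def by simp
    ultimately show ?thesis unfolding Hs_def by (simp add: algebra_simps)
  qed
  finally show ?thesis .
qed

lemma lower_uS:
  assumes m1: "1 \<le> m"
  shows "ennreal (q^(2*m+1) * gam m ^ k) \<le> uS (0,0,0,0)"
proof -
  have fin: "(\<Sum>N. (KS p ^^ N) (\<lambda>\<tau>. ennreal (hl m \<tau>)) (0,0,0,0)) \<le> ennreal (WL m (0,0,0,0))"
  proof (rule super_bound[OF closed_A0 _ tau0_A0])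
    fix \<tau> assume t: "\<tau> \<in> A0"
    show "ennreal (hl m \<tau>) + KS p (\<lambda>\<tau>. ennreal (WL m \<tau>)) \<tau> \<le> ennreal (WL m \<tau>)"
    proof (rule lift_super[OF closed_A0 _ _ _ t])
      show "0 \<le> WL m \<sigma>" for \<sigma> unfolding WL_def using q0 wL_nonneg vL_nonneg by simp
      show "\<sigma> \<in> A0 \<Longrightarrow> 0 \<le> hl m \<sigma>" for \<sigma> by (rule hl_nonneg)
      show "\<sigma> \<in> A0 \<Longrightarrow> hl m \<sigma> + KSr p (WL m) \<sigma> \<le> WL m \<sigma>" for \<sigma> by (rule WL_super)
    qed
  qed
  have "ennreal (hl m (0,0,0,0)) \<le> uS (0,0,0,0)"
    unfolding uS_def
  proof (rule sub_bound[OF closed_A0 _ tau0_A0])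
    fix \<tau> assume t: "\<tau> \<in> A0"
    show "ennreal (hl m \<tau>) \<le> ennreal (Psir \<tau>) + KS p (\<lambda>\<tau>. ennreal (hl m \<tau>)) \<tau>"
      using lift_sub[OF closed_A0 _ _ _ t, of "hl m" Psir] hl_nonneg Psir_nonneg hl_sub[OF m1] by blast
  next
    show "(\<Sum>N. (KS p ^^ N) (\<lambda>\<tau>. ennreal (hl m \<tau>)) (0,0,0,0)) \<noteq> \<top>"
      using fin by (auto simp: top_unique)
  qed
  moreover have "hl m (0,0,0,0) = q^(2*m+1) * gam m ^ k"
    using k1 unfolding hl_def gam_def by (simp add: power_Suc2[symmetric])
  ultimately show ?thesis by simp
qed

end

context rw
begin

lemma gam_eq: "gam m = 1 - (lam - 1) / (lam^(m+1) - 1)"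
proof -
  have "lam^(m+1) - 1 > 0" using lam_pow_gt1[of m] by simp
  then show ?thesis unfolding gam_def phi_def by (simp add: field_simps)
qed

lemma lam_powr_s: "k > 0 \<Longrightarrow> lam powr (ln k / ln lam) = k"
  using lam_gt1 by (simp add: powr_def)

lemma F_powr_s: "k > 0 \<Longrightarrow> F > 0 \<Longrightarrow> F powr (ln k / ln lam) = k powr (ln F / ln lam)"
  using lam_gt1 by (simp add: powr_def)

lemma lower_analysis:
  fixes F :: real and k :: nat
  assumes F2: "F \<ge> 2" and k2: "k \<ge> 2"
  shows "\<exists>m\<ge>1. exp (-2) / F^5 / real k powr (2 * (ln F / ln lam)) \<le> (1/F)^(2*m+1) * gam m ^ k"
proof -
  define s where "s = ln (real k) / ln lam"
  have lnl: "ln lam > 0" using lam_gt1 by simp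
  have kpos: "real k > 0" using k2 by simp
  have s0: "s \<ge> 0" unfolding s_def using k2 lnl by simp
  define m where "m = nat \<lceil>s\<rceil> + 1"
  have m1: "m \<ge> 1" unfolding m_def by simp
  have ms: "s \<le> real m" "real m \<le> s + 2" unfolding m_def using s0 by linarith+
  have "real k = lam powr s" unfolding s_def using kpos lam_powr_s by simp
  also have "\<dots> \<le> lam powr (real m)" using ms lam_gt1 by (intro powr_mono) auto
  also have "\<dots> = lam^m" using lam_gt1 by (simp add: powr_realpow)
  finally have kL: "real k \<le> lam^m" .
  define t where "t = (lam - 1) / (lam^(m+1) - 1)"
  have Lm1: "lam^m \<ge> 1" using lam_gt1 by (simp add: one_le_power)
  have den: "lam^(m+1) - 1 > 0" using lam_pow_gt1[of m] by simp
  have t0: "t \<ge> 0" unfolding t_def using den lam_gt1 by simp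
  have "t \<le> 1 / lam^m"
  proof -
    have "(lam - 1) * lam^m \<le> lam^(m+1) - 1" using Lm1 by (simp add: algebra_simps)
    then show ?thesis unfolding t_def using den Lm1 by (simp add: field_simps)
  qed
  also have "1 / lam^m \<le> 1 / real k" using kL kpos by (simp add: frac_le)
  finally have tk: "t \<le> 1 / real k" .
  then have kt: "real k * t \<le> 1" using kpos by (simp add: field_simps)
  have "1 / real k \<le> 1 / 2" using k2 by (intro divide_left_mono) auto
  then have th: "t \<le> 1/2" using tk by linarith
  have g: "gam m = 1 - t" unfolding gam_eq t_def ..
  have "ln (1 - t) \<ge> - t - 2 * t^2" using ln_one_minus_pos_lower_bound[OF t0 th] .
  then have "real k * ln (1 - t) \<ge> real k * (- t - 2 * t^2)" using kpos by (intro mult_left_mono) auto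
  moreover have "real k * (- t - 2 * t^2) \<ge> -2"
  proof -
    have "real k * t^2 = (real k * t) * t" by (simp add: power2_eq_square)
    also have "\<dots> \<le> 1 * (1/2)" using kt th t0 kpos by (intro mult_mono) auto
    finally show ?thesis using kt by (simp add: algebra_simps)
  qed
  ultimately have lnb: "real k * ln (1 - t) \<ge> -2" by linarith
  have "(1 - t) ^ k = exp (real k * ln (1 - t))"
  proof -
    have "1 - t > 0" using th by simp
    then show ?thesis by (simp add: exp_of_nat_mult)
  qed
  then have gk: "gam m ^ k \<ge> exp (-2)" using lnb g by simp
  have Fp: "F > 0" using F2 by simp
  have "F^(2*m+1) = F powr (real (2*m+1))" using Fp by (rule powr_realpow[symmetric])
  also have "\<dots> \<le> F powr (2 * s + 5)"
  proof (rule powr_mono)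
    show "real (2*m+1) \<le> 2 * s + 5" using ms by simp
  qed (use F2 in simp)
  also have "\<dots> = F powr (2 * s) * F powr 5" by (rule powr_add)
  also have "F powr 5 = F^5" using Fp by simp
  also have "F powr (2 * s) = (F powr s) powr 2" by (simp add: powr_powr mult.commute)
  also have "F powr s = real k powr (ln F / ln lam)" unfolding s_def using kpos Fp by (rule F_powr_s)
  also have "(real k powr (ln F / ln lam)) powr 2 = real k powr (2 * (ln F / ln lam))"
    by (simp add: powr_powr mult.commute)
  finally have FB: "F^(2*m+1) \<le> real k powr (2 * (ln F / ln lam)) * F^5" .
  have kp: "real k powr (2 * (ln F / ln lam)) > 0" using kpos by simp
  have "exp (-2) / F^5 / real k powr (2 * (ln F / ln lam)) = exp (-2) / (real k powr (2 * (ln F / ln lam)) * F^5)"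
    by (simp add: field_simps)
  also have "\<dots> \<le> exp (-2) / F^(2*m+1)"
    using FB Fp kp by (intro divide_left_mono mult_pos_pos) auto
  also have "\<dots> = (1/F)^(2*m+1) * exp (-2)" by (simp add: power_one_over)
  also have "\<dots> \<le> (1/F)^(2*m+1) * gam m ^ k" using gk Fp by (intro mult_left_mono) auto
  finally show ?thesis using m1 by blast
qed

definition gS :: "real \<Rightarrow> nat \<Rightarrow> real" where
  "gS F j = F^(2*j) * exp (- ((lam - 1) / lam / 2) * lam^j)"

lemma gS_nonneg: "F > 0 \<Longrightarrow> 0 \<le> gS F j"
  unfolding gS_def by simp

lemma gS_summable:
  assumes F2: "F \<ge> 2"
  shows "summable (gS F)"
proof -
  define b where "b = (lam - 1) / lam / 2"
  have b0: "b > 0" unfolding b_def using lam_gt1 by simp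
  define \<kappa> where "\<kappa> = b * (lam - 1)^2"
  have k0: "\<kappa> > 0" unfolding \<kappa>_def using b0 lam_gt1 by simp
  define N where "N = nat \<lceil>ln (2 * F^2) / \<kappa>\<rceil>"
  show ?thesis
  proof (rule summable_ratio_test[of "1/2" N])
    fix n assume nN: "n \<ge> N"
    have Fp: "F > 0" using F2 by simp
    have "ln (2 * F^2) / \<kappa> \<le> real n" using nN unfolding N_def by linarith
    then have "ln (2 * F^2) \<le> \<kappa> * real n" using k0 by (simp add: field_simps)
    also have "\<kappa> * real n \<le> b * (lam - 1) * lam^n"
    proof -
      have "1 + real n * (lam - 1) \<le> (1 + (lam - 1))^n"
        using lam_gt1 by (intro Bernoulli_inequality) simp
      then have "real n * (lam - 1) \<le> lam^n" by simp
      then have "b * (lam - 1) * (real n * (lam - 1)) \<le> b * (lam - 1) * lam^n"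
        using b0 lam_gt1 by (intro mult_left_mono) auto
      then show ?thesis unfolding \<kappa>_def by (simp add: power2_eq_square mult_ac)
    qed
    finally have L: "ln (2 * F^2) \<le> b * (lam - 1) * lam^n" .
    have "F^2 * exp (- (b * (lam - 1) * lam^n)) \<le> F^2 * exp (- ln (2 * F^2))"
      using L by (intro mult_left_mono) auto
    also have "\<dots> = 1/2" using Fp by (simp add: exp_minus)
    finally have R: "F^2 * exp (- (b * (lam - 1) * lam^n)) \<le> 1/2" .
    have e1: "F^(2*Suc n) = F^(2*n) * F^2" by (simp add: power_add[symmetric])
    have e2: "- b * lam^(Suc n) = - b * lam^n + - (b * (lam - 1) * lam^n)" by (simp add: algebra_simps)
    have "gS F (Suc n) = F^(2*n) * F^2 * (exp (- b * lam^n) * exp (- (b * (lam - 1) * lam^n)))"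
      unfolding gS_def b_def[symmetric] e1 e2 exp_add ..
    also have "\<dots> = gS F n * (F^2 * exp (- (b * (lam - 1) * lam^n)))"
      unfolding gS_def b_def[symmetric] by (simp add: mult_ac)
    also have "\<dots> \<le> gS F n * (1/2)" using R gS_nonneg[OF Fp] by (intro mult_left_mono) auto
    finally show "norm (gS F (Suc n)) \<le> 1/2 * norm (gS F n)"
      using gS_nonneg[OF Fp] by simp
  qed simp
qed

lemma bet_pow_bound:
  "bet m ^ k \<le> exp (- ((lam - 1) / lam / 2) * (real k / lam^m))"
proof -
  define t where "t = (lam - 1) / (lam^(m+1) - 1)"
  have den: "lam^(m+1) - 1 > 0" using lam_pow_gt1[of m] by simp
  have gt: "gam m = 1 - t" unfolding gam_eq t_def ..
  have b: "bet m = 1 - t / 2" unfolding bet_def gt by simp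
  have t1: "t \<le> 1" using gam01[of m] unfolding gam_eq t_def by simp
  have "(lam - 1) / lam / lam^m = (lam - 1) / lam^(m+1)" by (simp add: field_simps)
  also have "\<dots> \<le> t" unfolding t_def using den lam_gt1 by (intro divide_left_mono) auto
  finally have tl: "(lam - 1) / lam / lam^m \<le> t" .
  have "bet m ^ k \<le> exp (- t / 2) ^ k"
    unfolding b using t1 exp_ge_add_one_self[of "- t / 2"] by (intro power_mono) auto
  also have "\<dots> = exp (- (real k * t / 2))" by (simp add: exp_of_nat_mult[symmetric])
  also have "\<dots> \<le> exp (- ((lam - 1) / lam / 2) * (real k / lam^m))"
  proof -
    have "(lam - 1) / lam / 2 * (real k / lam^m) = real k * ((lam - 1) / lam / lam^m) / 2" by (simp add: mult_ac)
    also have "\<dots> \<le> real k * t / 2" using tl by (intro divide_right_mono mult_left_mono) auto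
    finally show ?thesis by simp
  qed
  finally show ?thesis .
qed

lemma upper_analysis:
  fixes F :: real
  assumes F2: "F \<ge> 2"
  shows "\<exists>C. \<forall>k::nat. k \<ge> 1 \<longrightarrow> summable (\<lambda>m. 2 * (1/F)^(2*m+1) * bet m ^ k) \<and>
      (\<Sum>m. 2 * (1/F)^(2*m+1) * bet m ^ k) \<le> C / real k powr (2 * (ln F / ln lam))"
proof -
  define q where "q = 1 / F"
  define r where "r = q^2"
  have Fp: "F > 0" using F2 by simp
  have q0: "0 < q" "q \<le> 1/2" unfolding q_def using F2 by auto
  have r0: "0 < r" "r < 1" unfolding r_def using q0 by (auto simp: power_less_one_iff)
  define Sg where "Sg = suminf (gS F)"
  have sg: "summable (gS F)" by (rule gS_summable[OF F2])
  have Sg0: "Sg \<ge> 0" unfolding Sg_def using sg gS_nonneg[OF Fp] by (intro suminf_nonneg) auto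
  define C where "C = 2 * q * F^2 * (Sg + r / (1 - r))"
  have Cr: "Sg + r / (1 - r) \<ge> 0" using Sg0 r0 by simp
  show ?thesis
  proof (intro exI allI impI conjI)
    fix k :: nat assume k1: "k \<ge> 1"
    define T where "T m = 2 * q^(2*m+1) * bet m ^ k" for m
    have qpow: "q^(2*m+1) = q * r^m" for m unfolding r_def by (simp add: power_mult[symmetric] mult.commute)
    have T0: "0 \<le> T m" for m unfolding T_def using q0 bet01[of m] by simp
    have Tgeo: "T m \<le> 2 * q * r^m" for m
    proof -
      have "bet m ^ k \<le> 1" using bet01[of m] by (intro power_le_one) auto
      then have "T m \<le> 2 * q^(2*m+1) * 1" unfolding T_def using q0 by (intro mult_left_mono) auto
      then show ?thesis unfolding qpow by simp
    qed
    have sT: "summable T"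
      by (rule summable_comparison_test'[of "\<lambda>m. 2 * q * r^m" 0])
         (use T0 Tgeo r0 in \<open>auto intro: summable_mult summable_geometric\<close>)
    then show "summable (\<lambda>m. 2 * (1/F)^(2*m+1) * bet m ^ k)" unfolding T_def q_def .
    define s where "s = ln (real k) / ln lam"
    have lnl: "ln lam > 0" using lam_gt1 by simp
    have kpos: "real k > 0" using k1 by simp
    have s0: "s \<ge> 0" unfolding s_def using k1 lnl by simp
    define m0 where "m0 = nat \<lfloor>s\<rfloor>"
    have m0s: "real m0 \<le> s" "s < real m0 + 1" unfolding m0_def using s0 by linarith+
    have "lam^m0 = lam powr (real m0)" using lam_gt1 by (simp add: powr_realpow)
    also have "\<dots> \<le> lam powr s" using m0s lam_gt1 by (intro powr_mono) auto
    also have "\<dots> = real k" unfolding s_def using kpos lam_powr_s by simp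
    finally have Lk: "lam^m0 \<le> real k" .
    define c where "c = 2 * q * q^(2*m0)"
    define b where "b = (lam - 1) / lam / 2"
    have part1: "T m \<le> c * gS F (m0 - m)" if "m \<le> m0" for m
    proof -
      have "lam^(m0 - m) * lam^m = lam^m0" using that by (simp add: power_add[symmetric])
      then have "lam^(m0 - m) \<le> real k / lam^m" using Lk lam_gt1 by (simp add: field_simps)
      moreover have "b \<ge> 0" unfolding b_def using lam_gt1 by simp
      ultimately have "b * lam^(m0 - m) \<le> b * (real k / lam^m)" by (intro mult_left_mono)
      then have "exp (- b * (real k / lam^m)) \<le> exp (- b * lam^(m0 - m))" by simp
      then have bk: "bet m ^ k \<le> exp (- b * lam^(m0 - m))"
        using bet_pow_bound[of m k] unfolding b_def by linarith
      have "2*m0 = 2*m + 2*(m0 - m)" using that by simp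
      then have "F^(2*m0) = F^(2*m) * F^(2*(m0 - m))" by (metis power_add)
      then have qq: "q^(2*m) = q^(2*m0) * F^(2*(m0 - m))" unfolding q_def using Fp
        by (simp add: power_one_over field_simps)
      have "T m = 2 * q * (q^(2*m0) * F^(2*(m0 - m))) * bet m ^ k" unfolding T_def qq[symmetric] by simp
      also have "\<dots> \<le> 2 * q * (q^(2*m0) * F^(2*(m0 - m))) * exp (- b * lam^(m0 - m))"
        using bk q0 Fp by (intro mult_left_mono) auto
      also have "\<dots> = c * gS F (m0 - m)" unfolding c_def gS_def b_def by (simp add: mult_ac)
      finally show ?thesis .
    qed
    have part2: "T (j + Suc m0) \<le> c * r^(j+1)" for j
    proof -
      have "T (j + Suc m0) \<le> 2 * q * r^(j + Suc m0)" by (rule Tgeo)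
      also have "r^(j + Suc m0) = q^(2*m0) * r^(j+1)" unfolding r_def
        by (simp add: power_mult[symmetric] power_add[symmetric] algebra_simps)
      finally show ?thesis unfolding c_def by (simp add: mult_ac)
    qed
    have c0: "c \<ge> 0" unfolding c_def using q0 by simp
    have "suminf T = (\<Sum>j. T (j + Suc m0)) + (\<Sum>i<Suc m0. T i)"
      by (rule suminf_split_initial_segment[OF sT])
    also have "(\<Sum>i<Suc m0. T i) \<le> c * Sg"
    proof -
      have "(\<Sum>i<Suc m0. T i) \<le> (\<Sum>i<Suc m0. c * gS F (m0 - i))"
        using part1 by (intro sum_mono) auto
      also have "\<dots> = c * (\<Sum>i<Suc m0. gS F (Suc m0 - Suc i))" by (simp only: sum_distrib_left diff_Suc_Suc)
      also have "(\<Sum>i<Suc m0. gS F (Suc m0 - Suc i)) = (\<Sum>i<Suc m0. gS F i)"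
        by (rule sum.nat_diff_reindex)
      also have "\<dots> \<le> Sg" unfolding Sg_def using sg gS_nonneg[OF Fp] by (intro sum_le_suminf) auto
      finally show ?thesis using c0 by (simp add: mult_left_mono)
    qed
    also have "(\<Sum>j. T (j + Suc m0)) \<le> c * (r / (1 - r))"
    proof -
      have sg2: "summable (\<lambda>j. c * r^(j+1))" using r0 by (intro summable_mult summable_geometric_iff[THEN iffD2]
        summable_mult2) auto
      have sTs: "summable (\<lambda>j. T (j + Suc m0))" using sT by (subst summable_iff_shift)
      have "(\<Sum>j. T (j + Suc m0)) \<le> (\<Sum>j. c * r^(j+1))"
        using part2 by (intro suminf_le[OF _ sTs sg2])
      also have "(\<Sum>j. c * r^(j+1)) = c * r * (\<Sum>j. r^j)"
        by (subst suminf_mult[symmetric]) (use r0 in \<open>auto simp: mult_ac intro: summable_geometric\<close>)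
      also have "\<dots> = c * (r / (1 - r))" using r0 by (simp add: suminf_geometric)
      finally show ?thesis .
    qed
    finally have ST: "suminf T \<le> c * (Sg + r / (1 - r))" by (simp add: distrib_left)
    have "F^(2*m0) \<ge> real k powr (2 * (ln F / ln lam)) / F^2"
    proof -
      have "real k powr (2 * (ln F / ln lam)) / F^2 = F powr (2 * s) / F powr 2"
      proof -
        have "real k powr (2 * (ln F / ln lam)) = F powr (2 * s)"
          unfolding s_def using kpos Fp by (simp add: powr_def mult_ac)
        moreover have "F powr 2 = F^2" using Fp by simp
        ultimately show ?thesis by simp
      qed
      also have "\<dots> = F powr (2 * s - 2)" by (simp add: powr_diff)
      also have "\<dots> \<le> F powr (real (2*m0))" using m0s F2 by (intro powr_mono) auto
      also have "\<dots> = F^(2*m0)" using Fp by (rule powr_realpow)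
      finally show ?thesis .
    qed
    then have "q^(2*m0) \<le> F^2 / real k powr (2 * (ln F / ln lam))"
      unfolding q_def using Fp kpos by (simp add: power_one_over field_simps)
    then have "c \<le> 2 * q * (F^2 / real k powr (2 * (ln F / ln lam)))"
      unfolding c_def using q0 by (intro mult_left_mono) auto
    then have "c * (Sg + r / (1 - r)) \<le> 2 * q * (F^2 / real k powr (2 * (ln F / ln lam))) * (Sg + r / (1 - r))"
      using Cr by (intro mult_right_mono) auto
    also have "\<dots> = C / real k powr (2 * (ln F / ln lam))" unfolding C_def by simp
    finally show "(\<Sum>m. 2 * (1/F)^(2*m+1) * bet m ^ k) \<le> C / real k powr (2 * (ln F / ln lam))"
      using ST unfolding T_def q_def by simp
  qed
qed

end

type_synonym fstate = "int \<times> (int \<Rightarrow> bool) \<times> nat"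
type_synonym e4 = "(bool \<times> bool) \<times> (bool \<times> bool)"

definition piG :: "('a, 'b) monoid_scheme \<Rightarrow> bool \<times> bool \<times> 'a \<times> 'a \<Rightarrow> e4" where
  "piG G x = (case x of (C,D,U,V) \<Rightarrow> ((C,D),(U = \<one>\<^bsub>G\<^esub>, V = \<one>\<^bsub>G\<^esub>)))"

definition nextB :: "fstate \<Rightarrow> e4 \<Rightarrow> fstate" where
  "nextB \<sigma> e = (case \<sigma> of (x,B,c) \<Rightarrow> case e of ((C,D),(u,v)) \<Rightarrow>
     (x + incr x C D, B(x := u, x + incr x C D := v), if x + incr x C D = 0 then Suc c else c))"

fun trajB :: "('a, 'b) monoid_scheme \<Rightarrow> fstate \<Rightarrow> (bool \<times> bool \<times> 'a \<times> 'a) stream \<Rightarrow> nat \<Rightarrow> fstate" where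
  "trajB G \<sigma> \<omega> 0 = \<sigma>"
| "trajB G \<sigma> \<omega> (Suc n) = trajB G (nextB \<sigma> (piG G (shd \<omega>))) (stl \<omega>) n"

fun trajL :: "fstate \<Rightarrow> e4 list \<Rightarrow> fstate" where
  "trajL \<sigma> [] = \<sigma>"
| "trajL \<sigma> (e # es) = trajL (nextB \<sigma> e) es"

lemma trajB_trajL: "trajB G \<sigma> \<omega> n = trajL \<sigma> (stake n (smap (piG G) \<omega>))"
  by (induction n arbitrary: \<sigma> \<omega>) auto

lemma trajB_Suc': "trajB G \<sigma> \<omega> (Suc n) = nextB (trajB G \<sigma> \<omega> n) (piG G (\<omega> !! n))"
  by (induction n arbitrary: \<sigma> \<omega>) auto

lemma meas_traj:
  "(\<lambda>\<omega>. f (trajB G \<sigma> \<omega> n)) \<in> measurable (stream_space (measure_pmf M)) (N :: 'c measure)"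
  if "\<And>x. f x \<in> space N"
proof -
  have "(\<lambda>\<omega>. f (trajB G \<sigma> \<omega> n)) = (\<lambda>l. f (trajL \<sigma> l)) \<circ> stake n \<circ> smap (piG G)"
    by (auto simp: trajB_trajL)
  moreover have m1: "smap (piG G) \<in> measurable (stream_space (measure_pmf M)) (stream_space (count_space UNIV))"
    by (rule measurable_smap) simp
  moreover have m2: "stake n \<in> measurable (stream_space (count_space UNIV)) (count_space (UNIV :: e4 list set))"
    by (rule measurable_stake)
  moreover have m3: "(\<lambda>l. f (trajL \<sigma> l)) \<in> measurable (count_space (UNIV :: e4 list set)) N"
    using that by (auto simp: measurable_count_space_eq1)
  ultimately show ?thesis using measurable_comp[OF m1 measurable_comp[OF m2 m3]] by simp
qed

definition E2p :: "real \<Rightarrow> (bool \<times> bool) pmf" where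
  "E2p p = pair_pmf (bernoulli_pmf p) (bernoulli_pmf (1/2))"
definition E2q :: "real \<Rightarrow> (bool \<times> bool) pmf" where
  "E2q q = pair_pmf (bernoulli_pmf q) (bernoulli_pmf q)"

definition KF :: "real \<Rightarrow> real \<Rightarrow> (fstate \<Rightarrow> ennreal) \<Rightarrow> fstate \<Rightarrow> ennreal" where
  "KF p q f \<sigma> = (\<integral>\<^sup>+e. f (nextB \<sigma> e) \<partial>measure_pmf (pair_pmf (E2p p) (E2q q)))"

lemma unif_bool:
  fixes h :: "bool \<Rightarrow> ennreal"
  assumes S: "finite S" "a \<in> S"
  shows "(\<integral>\<^sup>+x. h (x = a) \<partial>measure_pmf (pmf_of_set S)) = (\<integral>\<^sup>+b. h b \<partial>measure_pmf (bernoulli_pmf (1 / real (card S))))"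
proof -
  define N where "N = card S"
  have N1: "N \<ge> 1" unfolding N_def using S by (metis One_nat_def Suc_leI card_gt_0_iff empty_iff)
  have "(\<Sum>x\<in>S. h (x = a)) = h True + (\<Sum>x\<in>S - {a}. h (x = a))"
    using S by (simp add: sum.remove)
  also have "(\<Sum>x\<in>S - {a}. h (x = a)) = (\<Sum>x\<in>S - {a}. h False)"
    by (intro sum.cong) auto
  also have "\<dots> = of_nat (N - 1) * h False"
    using S by (simp add: N_def card_Diff_singleton)
  finally have sum: "(\<Sum>x\<in>S. h (x = a)) = h True + of_nat (N - 1) * h False" .
  have "(\<integral>\<^sup>+x. h (x = a) \<partial>measure_pmf (pmf_of_set S)) = (h True + of_nat (N - 1) * h False) / of_nat N"
    using S by (subst nn_integral_pmf_of_set) (auto simp: sum N_def)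
  also have "\<dots> = h True * ennreal (1 / real N) + h False * ennreal (1 - 1 / real N)"
  proof -
    have e1: "ennreal (1 / real N) = 1 / of_nat N"
      using N1 by (simp add: divide_ennreal[symmetric] ennreal_of_nat_eq_real_of_nat)
    have "1 - 1 / real N = real (N - 1) / real N" using N1 by (simp add: field_simps)
    then have e2: "ennreal (1 - 1 / real N) = of_nat (N - 1) / of_nat N"
      using N1 by (simp add: divide_ennreal[symmetric] ennreal_of_nat_eq_real_of_nat)
    show ?thesis unfolding e1 e2
      by (simp add: divide_ennreal_def distrib_left distrib_right mult_ac)
  qed
  also have "\<dots> = (\<integral>\<^sup>+b. h b \<partial>measure_pmf (bernoulli_pmf (1 / real (card S))))"
    using N1 by (subst nn_integral_bernoulli_pmf) (auto simp: N_def)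
  finally show ?thesis .
qed

lemma unif_bool2:
  fixes F :: "bool \<Rightarrow> bool \<Rightarrow> ennreal"
  assumes S: "finite S" "a \<in> S"
  shows "(\<integral>\<^sup>+U. \<integral>\<^sup>+V. F (U = a) (V = a) \<partial>measure_pmf (pmf_of_set S) \<partial>measure_pmf (pmf_of_set S))
       = (\<integral>\<^sup>+u. \<integral>\<^sup>+v. F u v \<partial>measure_pmf (bernoulli_pmf (1 / real (card S))) \<partial>measure_pmf (bernoulli_pmf (1 / real (card S))))"
proof -
  have "(\<integral>\<^sup>+V. F (U = a) (V = a) \<partial>measure_pmf (pmf_of_set S))
      = (\<integral>\<^sup>+v. F (U = a) v \<partial>measure_pmf (bernoulli_pmf (1 / real (card S))))" for U
    using unif_bool[OF S, of "\<lambda>b. F (U = a) b"] .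
  then have "(\<integral>\<^sup>+U. \<integral>\<^sup>+V. F (U = a) (V = a) \<partial>measure_pmf (pmf_of_set S) \<partial>measure_pmf (pmf_of_set S))
      = (\<integral>\<^sup>+U. (\<lambda>u. \<integral>\<^sup>+v. F u v \<partial>measure_pmf (bernoulli_pmf (1 / real (card S)))) (U = a) \<partial>measure_pmf (pmf_of_set S))"
    by simp
  also have "\<dots> = (\<integral>\<^sup>+u. \<integral>\<^sup>+v. F u v \<partial>measure_pmf (bernoulli_pmf (1 / real (card S))) \<partial>measure_pmf (bernoulli_pmf (1 / real (card S))))"
    by (rule unif_bool[OF S])
  finally show ?thesis .
qed

lemma step_map:
  assumes S: "finite (carrier G)" "\<one>\<^bsub>G\<^esub> \<in> carrier G"
  shows "(\<integral>\<^sup>+x. g (piG G x) \<partial>measure_pmf (step_pmf p G))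
       = (\<integral>\<^sup>+e. g e \<partial>measure_pmf (pair_pmf (E2p p) (E2q (1 / real (card (carrier G))))))"
  unfolding step_pmf_def E2p_def E2q_def nn_integral_pair_pmf' piG_def
  by (simp add: unif_bool2[OF S, of "\<lambda>u v. g ((_, _), (u, v))"])

lemma traj_integral:
  assumes S: "finite (carrier G)" "\<one>\<^bsub>G\<^esub> \<in> carrier G"
  shows "(\<integral>\<^sup>+\<omega>. f (trajB G \<sigma> \<omega> n) \<partial>walk_space p G) = (KF p (1 / real (card (carrier G))) ^^ n) f \<sigma>"
proof (induction n arbitrary: \<sigma>)
  case 0
  interpret S: prob_space "walk_space p G"
    unfolding walk_space_def by (rule prob_space.prob_space_stream_space[OF prob_space_measure_pmf])
  show ?case by (simp add: S.emeasure_space_1)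
next
  case (Suc n)
  have meas: "(\<lambda>\<omega>. f (trajB G \<sigma> \<omega> (Suc n))) \<in> borel_measurable (stream_space (measure_pmf (step_pmf p G)))"
    by (rule meas_traj) simp
  have "(\<integral>\<^sup>+\<omega>. f (trajB G \<sigma> \<omega> (Suc n)) \<partial>walk_space p G)
      = (\<integral>\<^sup>+x. \<integral>\<^sup>+\<omega>. f (trajB G \<sigma> (x ## \<omega>) (Suc n)) \<partial>walk_space p G \<partial>measure_pmf (step_pmf p G))"
    unfolding walk_space_def
    by (rule prob_space.nn_integral_stream_space[OF prob_space_measure_pmf meas])
  also have "\<dots> = (\<integral>\<^sup>+x. (KF p (1 / real (card (carrier G))) ^^ n) f (nextB \<sigma> (piG G x)) \<partial>measure_pmf (step_pmf p G))"
    using Suc by simp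
  also have "\<dots> = KF p (1 / real (card (carrier G))) ((KF p (1 / real (card (carrier G))) ^^ n) f) \<sigma>"
    unfolding KF_def by (rule step_map[OF S])
  finally show ?case by simp
qed

lemma incr_pm: "incr x C D = 1 \<or> incr x C D = -1"
  unfolding incr_def by auto

definition extS :: "int \<Rightarrow> st \<Rightarrow> st" where
  "extS x \<tau> = (case \<tau> of (y,lo,hi,c) \<Rightarrow> (y, min lo x, max hi x, c))"

lemma extS_comm: "upS (extS x \<tau>) = extS x (upS \<tau>)" "downS (extS x \<tau>) = extS x (downS \<tau>)" "fst (extS x \<tau>) = fst \<tau>"
  unfolding extS_def upS_def downS_def by (auto split: prod.splits simp: min.assoc min.commute min.left_commute max.assoc max.commute max.left_commute)

context rw
begin

lemma Kn_integral:
  "(KS p ^^ n) (\<lambda>\<tau>. \<integral>\<^sup>+z. F z \<tau> \<partial>measure_pmf M) \<tau> = (\<integral>\<^sup>+z. (KS p ^^ n) (F z) \<tau> \<partial>measure_pmf M)"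
proof (induction n arbitrary: \<tau>)
  case 0 then show ?case by simp
next
  case (Suc n)
  have e: "(KS p ^^ n) (\<lambda>\<tau>. \<integral>\<^sup>+z. F z \<tau> \<partial>measure_pmf M) = (\<lambda>\<tau>. \<integral>\<^sup>+z. (KS p ^^ n) (F z) \<tau> \<partial>measure_pmf M)"
    using Suc by auto
  let ?a = "ennreal (pu p (fst \<tau>))" and ?b = "ennreal (1 - pu p (fst \<tau>))"
  have 1: "KS p (\<lambda>\<tau>. \<integral>\<^sup>+z. (KS p ^^ n) (F z) \<tau> \<partial>measure_pmf M) \<tau>
     = ?a * (\<integral>\<^sup>+z. (KS p ^^ n) (F z) (upS \<tau>) \<partial>measure_pmf M) + ?b * (\<integral>\<^sup>+z. (KS p ^^ n) (F z) (downS \<tau>) \<partial>measure_pmf M)"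
    by (rule Kexp)
  have 2: "KS p ((KS p ^^ n) (F z)) \<tau> = ?a * (KS p ^^ n) (F z) (upS \<tau>) + ?b * (KS p ^^ n) (F z) (downS \<tau>)" for z
    by (rule Kexp)
  show ?case unfolding Kn_Suc e 1 2
    by (simp add: nn_integral_cmult nn_integral_add)
qed

lemma Kn_ext:
  assumes "\<And>\<tau>. upS (e \<tau>) = e (upS \<tau>)" "\<And>\<tau>. downS (e \<tau>) = e (downS \<tau>)" "\<And>\<tau>. fst (e \<tau>) = fst \<tau>"
  shows "(KS p ^^ n) (\<lambda>\<tau>. f (e \<tau>)) \<tau> = (KS p ^^ n) f (e \<tau>)"
proof (induction n arbitrary: \<tau>)
  case 0 then show ?case by simp
next
  case (Suc n)
  have e: "(KS p ^^ n) (\<lambda>\<tau>. f (e \<tau>)) = (\<lambda>\<tau>. (KS p ^^ n) f (e \<tau>))" using Suc by auto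
  have 1: "KS p (\<lambda>\<tau>. (KS p ^^ n) f (e \<tau>)) \<tau> = ennreal (pu p (fst \<tau>)) * (KS p ^^ n) f (e (upS \<tau>)) + ennreal (1 - pu p (fst \<tau>)) * (KS p ^^ n) f (e (downS \<tau>))"
    by (rule Kexp)
  have 2: "KS p ((KS p ^^ n) f) (e \<tau>) = ennreal (pu p (fst (e \<tau>))) * (KS p ^^ n) f (upS (e \<tau>)) + ennreal (1 - pu p (fst (e \<tau>))) * (KS p ^^ n) f (downS (e \<tau>))"
    by (rule Kexp)
  show ?case unfolding Kn_Suc e 1 2 using assms by simp
qed

end

context rwk
begin

definition PsiB :: "(int \<Rightarrow> bool) \<Rightarrow> st \<Rightarrow> real" where
  "PsiB B \<tau> = (case \<tau> of (y,lo,hi,c) \<Rightarrow>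
     if c = k \<and> y = 0 \<and> (\<forall>z. z < lo \<or> hi < z \<longrightarrow> B z) then q ^ nat (hi - lo + 1) else 0)"

definition PhiF :: "fstate \<Rightarrow> ennreal" where
  "PhiF \<sigma> = (case \<sigma> of (x,B,c) \<Rightarrow> if x = 0 \<and> c = k \<and> (\<forall>z. B z) then 1 else 0)"

lemma q01: "0 \<le> q" "q \<le> 1" using q0 q1 by auto

lemma int_bern_const: "(\<integral>\<^sup>+v. a \<partial>measure_pmf (bernoulli_pmf r)) = a"
  by (simp add: measure_pmf.emeasure_space_1)

lemma avg_Psi:
  assumes adj: "x = x' + 1 \<or> x = x' - 1" and in': "lo \<le> x'" "x' \<le> hi"
  shows "(\<integral>\<^sup>+uv. ennreal (PsiB (B(x := fst uv, x' := snd uv)) (y,lo,hi,c)) \<partial>measure_pmf (E2q q))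
       = ennreal (PsiB B (y, min lo x, max hi x, c))"
proof (cases "lo \<le> x \<and> x \<le> hi")
  case True
  have "PsiB (B(x := u, x' := v)) (y,lo,hi,c) = PsiB B (y,lo,hi,c)" for u v
    unfolding PsiB_def using True in' by auto
  moreover have "min lo x = lo" "max hi x = hi" using True by auto
  ultimately show ?thesis unfolding E2q_def nn_integral_pair_pmf' by (simp add: int_bern_const)
next
  case False
  define P0 where "P0 = (c = k \<and> y = 0 \<and> (\<forall>z. (z < lo \<or> hi < z) \<and> z \<noteq> x \<longrightarrow> B z))"
  have xx: "x \<noteq> x'" using adj by auto
  have i: "PsiB (B(x := u, x' := v)) (y,lo,hi,c) = (if u \<and> P0 then q ^ nat (hi - lo + 1) else 0)" for u v
  proof -
    have xo: "x < lo \<or> hi < x" using False by auto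
    have "(\<forall>z. z < lo \<or> hi < z \<longrightarrow> (B(x := u, x' := v)) z) \<longleftrightarrow> u \<and> (\<forall>z. (z < lo \<or> hi < z) \<and> z \<noteq> x \<longrightarrow> B z)"
    proof
      assume H: "\<forall>z. z < lo \<or> hi < z \<longrightarrow> (B(x := u, x' := v)) z"
      have u using H[rule_format, of x] xo xx by simp
      moreover have "B z" if "(z < lo \<or> hi < z) \<and> z \<noteq> x" for z
      proof -
        have "z \<noteq> x'" using that in' by auto
        then show ?thesis using H[rule_format, of z] that by simp
      qed
      ultimately show "u \<and> (\<forall>z. (z < lo \<or> hi < z) \<and> z \<noteq> x \<longrightarrow> B z)" by blast
    next
      assume H: "u \<and> (\<forall>z. (z < lo \<or> hi < z) \<and> z \<noteq> x \<longrightarrow> B z)"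
      show "\<forall>z. z < lo \<or> hi < z \<longrightarrow> (B(x := u, x' := v)) z"
      proof (intro allI impI)
        fix z assume z: "z < lo \<or> hi < z"
        then have "z \<noteq> x'" using in' by auto
        then show "(B(x := u, x' := v)) z" using H z by (cases "z = x") auto
      qed
    qed
    then show ?thesis unfolding PsiB_def P0_def by auto
  qed
  have ex: "nat (max hi x - min lo x + 1) = Suc (nat (hi - lo + 1))" using False adj in' by linarith
  have r: "PsiB B (y, min lo x, max hi x, c) = (if P0 then q ^ Suc (nat (hi - lo + 1)) else 0)"
  proof -
    have xo2: "x = lo - 1 \<or> x = hi + 1" using False adj in' by linarith
    have "(z < min lo x \<or> max hi x < z) \<longleftrightarrow> ((z < lo \<or> hi < z) \<and> z \<noteq> x)" for z
      using xo2 in' by linarith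
    then have "(\<forall>z. z < min lo x \<or> max hi x < z \<longrightarrow> B z) \<longleftrightarrow> (\<forall>z. (z < lo \<or> hi < z) \<and> z \<noteq> x \<longrightarrow> B z)"
      by simp
    then show ?thesis unfolding PsiB_def P0_def by (auto simp: ex)
  qed
  show ?thesis
    unfolding E2q_def nn_integral_pair_pmf' i r using q01
    by (auto simp: int_bern_const ennreal_mult'[symmetric] mult.commute)
qed

lemma closed_Ax: "closedS {\<tau>. fst (snd \<tau>) \<le> x' \<and> x' \<le> fst (snd (snd \<tau>))}"
  unfolding closedS_def upS_def downS_def by (auto split: prod.splits)

lemma key:
  assumes adj: "x = x' + 1 \<or> x = x' - 1"
  shows "(\<integral>\<^sup>+uv. (KS p ^^ n) (\<lambda>\<tau>. ennreal (PsiB (B(x := fst uv, x' := snd uv)) \<tau>)) (x',x',x',c') \<partial>measure_pmf (E2q q))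
       = (KS p ^^ n) (\<lambda>\<tau>. ennreal (PsiB B \<tau>)) (x', min x x', max x x', c')"
proof -
  have "(\<integral>\<^sup>+uv. (KS p ^^ n) (\<lambda>\<tau>. ennreal (PsiB (B(x := fst uv, x' := snd uv)) \<tau>)) (x',x',x',c') \<partial>measure_pmf (E2q q))
     = (KS p ^^ n) (\<lambda>\<tau>. \<integral>\<^sup>+uv. ennreal (PsiB (B(x := fst uv, x' := snd uv)) \<tau>) \<partial>measure_pmf (E2q q)) (x',x',x',c')"
    by (rule Kn_integral[symmetric])
  also have "\<dots> = (KS p ^^ n) (\<lambda>\<tau>. ennreal (PsiB B (extS x \<tau>))) (x',x',x',c')"
  proof (rule Kn_cong_on[OF closed_Ax])
    fix \<tau> :: st assume "\<tau> \<in> {\<tau>. fst (snd \<tau>) \<le> x' \<and> x' \<le> fst (snd (snd \<tau>))}"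
    then show "(\<integral>\<^sup>+uv. ennreal (PsiB (B(x := fst uv, x' := snd uv)) \<tau>) \<partial>measure_pmf (E2q q)) = ennreal (PsiB B (extS x \<tau>))"
      using avg_Psi[OF adj] unfolding extS_def by (auto split: prod.splits)
  qed simp
  also have "\<dots> = (KS p ^^ n) (\<lambda>\<tau>. ennreal (PsiB B \<tau>)) (extS x (x',x',x',c'))"
    by (rule Kn_ext) (simp_all add: extS_comm)
  finally show ?thesis unfolding extS_def by (simp add: min.commute max.commute)
qed

lemma base:
  assumes xx: "x \<noteq> x'"
  shows "(\<integral>\<^sup>+uv. PhiF (x', B(x := fst uv, x' := snd uv), c') \<partial>measure_pmf (E2q q))
       = (\<integral>\<^sup>+uv. ennreal (PsiB (B(x := fst uv, x' := snd uv)) (x',x',x',c')) \<partial>measure_pmf (E2q q))"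
proof -
  have inner: "(\<integral>\<^sup>+v. PhiF (x', B(x := u, x' := v), c') \<partial>measure_pmf (bernoulli_pmf q))
      = (\<integral>\<^sup>+v. ennreal (PsiB (B(x := u, x' := v)) (x', x', x', c')) \<partial>measure_pmf (bernoulli_pmf q))" for u
  proof -
  define P where "P = (x' = 0 \<and> c' = k \<and> (\<forall>z. z \<noteq> x' \<longrightarrow> (B(x := u)) z))"
  have a: "PhiF (x', B(x := u, x' := v), c') = (if v \<and> P then 1 else 0)" for v
  proof -
    have iff: "(\<forall>z. (B(x := u, x' := v)) z) \<longleftrightarrow> v \<and> (\<forall>z. z \<noteq> x' \<longrightarrow> (B(x := u)) z)"
    proof
      assume H: "\<forall>z. (B(x := u, x' := v)) z"
      have v using H[rule_format, of x'] by simp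
      moreover have "(B(x := u)) z" if "z \<noteq> x'" for z using H[rule_format, of z] that by simp
      ultimately show "v \<and> (\<forall>z. z \<noteq> x' \<longrightarrow> (B(x := u)) z)" by simp
    next
      assume H: "v \<and> (\<forall>z. z \<noteq> x' \<longrightarrow> (B(x := u)) z)"
      show "\<forall>z. (B(x := u, x' := v)) z"
      proof
        fix z show "(B(x := u, x' := v)) z" using H by (cases "z = x'") auto
      qed
    qed
    have "(x' = 0 \<and> c' = k \<and> (\<forall>z. (B(x := u, x' := v)) z)) \<longleftrightarrow> (v \<and> P)"
      unfolding iff P_def by (simp only: conj_ac)
    then show ?thesis by (simp only: PhiF_def prod.case)
  qed
  have b: "PsiB (B(x := u, x' := v)) (x',x',x',c') = (if P then q else 0)" for v
  proof -
    have iff: "(\<forall>z. z < x' \<or> x' < z \<longrightarrow> (B(x := u, x' := v)) z) \<longleftrightarrow> (\<forall>z. z \<noteq> x' \<longrightarrow> (B(x := u)) z)"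
    proof -
      have "(z < x' \<or> x' < z) \<longleftrightarrow> z \<noteq> x'" for z by auto
      moreover have "z \<noteq> x' \<Longrightarrow> (B(x := u, x' := v)) z = (B(x := u)) z" for z by simp
      ultimately show ?thesis by metis
    qed
    have "(c' = k \<and> x' = 0 \<and> (\<forall>z. z < x' \<or> x' < z \<longrightarrow> (B(x := u, x' := v)) z)) \<longleftrightarrow> P"
      unfolding iff P_def by (simp only: conj_ac)
    then show ?thesis by (simp only: PsiB_def prod.case) simp
  qed
  show ?thesis
    unfolding a b using q01 by (auto simp: int_bern_const)
  qed
  then show ?thesis unfolding E2q_def nn_integral_pair_pmf' by simp
qed

lemma KF_step:
  assumes H: "\<And>C D. (\<integral>\<^sup>+uv. Gf (x + incr x C D, B(x := fst uv, x + incr x C D := snd uv),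
        if x + incr x C D = 0 then Suc c else c) \<partial>measure_pmf (E2q q))
      = (KS p ^^ n) \<Psi> (x + incr x C D, min x (x + incr x C D), max x (x + incr x C D),
        if x + incr x C D = 0 then Suc c else c)"
  shows "KF p q Gf (x,B,c) = (KS p ^^ Suc n) \<Psi> (x,x,x,c)"
proof -
  have "KF p q Gf (x,B,c) = (\<integral>\<^sup>+cd. \<integral>\<^sup>+uv. Gf (nextB (x,B,c) (cd,uv)) \<partial>measure_pmf (E2q q) \<partial>measure_pmf (E2p p))"
    unfolding KF_def nn_integral_pair_pmf' ..
  also have "\<dots> = (\<integral>\<^sup>+cd. (KS p ^^ n) \<Psi> (nextS (x,x,x,c) cd) \<partial>measure_pmf (E2p p))"
  proof (intro nn_integral_cong)
    fix cd :: "bool \<times> bool"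
    obtain C D where cd: "cd = (C,D)" by (cases cd) auto
    have "nextB (x,B,c) (cd,uv) = (x + incr x C D, B(x := fst uv, x + incr x C D := snd uv),
        if x + incr x C D = 0 then Suc c else c)" for uv
      unfolding nextB_def cd by (cases uv) simp
    then show "(\<integral>\<^sup>+uv. Gf (nextB (x,B,c) (cd,uv)) \<partial>measure_pmf (E2q q)) = (KS p ^^ n) \<Psi> (nextS (x,x,x,c) cd)"
      using H[of C D] unfolding cd nextS_def by simp
  qed
  also have "\<dots> = (KS p ^^ Suc n) \<Psi> (x,x,x,c)"
    unfolding Kn_Suc KS_def E2p_def ..
  finally show ?thesis .
qed

lemma adj_incr: "x = (x + incr x C D) + 1 \<or> x = (x + incr x C D) - 1"
  using incr_pm[of x C D] by auto

lemma claim: "(KF p q ^^ Suc n) PhiF (x,B,c) = (KS p ^^ Suc n) (\<lambda>\<tau>. ennreal (PsiB B \<tau>)) (x,x,x,c)"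
proof (induction n arbitrary: x B c)
  case 0
  have e: "(KF p q ^^ Suc 0) PhiF (x,B,c) = KF p q PhiF (x,B,c)" by simp
  show ?case unfolding e
  proof (rule KF_step[where n=0])
    fix C D
    let ?x' = "x + incr x C D" and ?c' = "if x + incr x C D = 0 then Suc c else c"
    have xx: "x \<noteq> ?x'" using incr_pm[of x C D] by auto
    have "(\<integral>\<^sup>+uv. PhiF (?x', B(x := fst uv, ?x' := snd uv), ?c') \<partial>measure_pmf (E2q q))
        = (\<integral>\<^sup>+uv. (KS p ^^ 0) (\<lambda>\<tau>. ennreal (PsiB (B(x := fst uv, ?x' := snd uv)) \<tau>)) (?x',?x',?x',?c') \<partial>measure_pmf (E2q q))"
      using base[OF xx] by simp
    also have "\<dots> = (KS p ^^ 0) (\<lambda>\<tau>. ennreal (PsiB B \<tau>)) (?x', min x ?x', max x ?x', ?c')"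
      by (rule key[OF adj_incr])
    finally show "(\<integral>\<^sup>+uv. PhiF (?x', B(x := fst uv, ?x' := snd uv), ?c') \<partial>measure_pmf (E2q q))
        = (KS p ^^ 0) (\<lambda>\<tau>. ennreal (PsiB B \<tau>)) (?x', min x ?x', max x ?x', ?c')" .
  qed
next
  case (Suc n)
  have e: "(KF p q ^^ Suc (Suc n)) PhiF (x,B,c) = KF p q ((KF p q ^^ Suc n) PhiF) (x,B,c)"
    by simp
  show ?case unfolding e
  proof (rule KF_step[where n="Suc n"])
    fix C D
    let ?x' = "x + incr x C D" and ?c' = "if x + incr x C D = 0 then Suc c else c"
    have "(\<integral>\<^sup>+uv. (KF p q ^^ Suc n) PhiF (?x', B(x := fst uv, ?x' := snd uv), ?c') \<partial>measure_pmf (E2q q))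
        = (\<integral>\<^sup>+uv. (KS p ^^ Suc n) (\<lambda>\<tau>. ennreal (PsiB (B(x := fst uv, ?x' := snd uv)) \<tau>)) (?x',?x',?x',?c') \<partial>measure_pmf (E2q q))"
      using Suc.IH by simp
    also have "\<dots> = (KS p ^^ Suc n) (\<lambda>\<tau>. ennreal (PsiB B \<tau>)) (?x', min x ?x', max x ?x', ?c')"
      by (rule key[OF adj_incr])
    finally show "(\<integral>\<^sup>+uv. (KF p q ^^ Suc n) PhiF (?x', B(x := fst uv, ?x' := snd uv), ?c') \<partial>measure_pmf (E2q q))
        = (KS p ^^ Suc n) (\<lambda>\<tau>. ennreal (PsiB B \<tau>)) (?x', min x ?x', max x ?x', ?c')" .
  qed
qed

end

declare Spos.simps(2)[simp del]

fun cntz :: "(bool \<times> bool \<times> 'a \<times> 'a) stream \<Rightarrow> nat \<Rightarrow> nat" where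
  "cntz \<omega> 0 = 0"
| "cntz \<omega> (Suc n) = (if Spos \<omega> (Suc n) = 0 then Suc (cntz \<omega> n) else cntz \<omega> n)"

lemma traj_defs:
  "trajB G (0, \<lambda>_. True, 0) \<omega> n = (Spos \<omega> n, \<lambda>i. Lamps G \<omega> n i = \<one>\<^bsub>G\<^esub>, cntz \<omega> n)"
proof (induction n)
  case 0 then show ?case by simp
next
  case (Suc n)
  obtain C D U V where w: "\<omega> !! n = (C,D,U,V)" by (cases "\<omega> !! n") auto
  show ?case unfolding trajB_Suc' Suc w
    by (auto simp: nextB_def piG_def w fun_eq_iff Spos.simps(2))
qed

lemma cntz_mono: "m \<le> n \<Longrightarrow> cntz \<omega> m \<le> cntz \<omega> n"
proof (induction n)
  case 0 then show ?case by simp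
next
  case (Suc n)
  then show ?case by (cases "m = Suc n") (auto simp: le_Suc_eq)
qed

lemma cntz_strict: "m < n \<Longrightarrow> Spos \<omega> n = 0 \<Longrightarrow> cntz \<omega> m < cntz \<omega> n"
proof -
  assume a: "m < n" "Spos \<omega> n = 0"
  then obtain n' where n: "n = Suc n'" by (cases n) auto
  have "cntz \<omega> m \<le> cntz \<omega> n'" using a n by (intro cntz_mono) auto
  then show ?thesis using a n by simp
qed

lemma cntz_flat: "m \<le> n \<Longrightarrow> (\<And>j. m < j \<Longrightarrow> j \<le> n \<Longrightarrow> Spos \<omega> j \<noteq> 0) \<Longrightarrow> cntz \<omega> n = cntz \<omega> m"
proof (induction n)
  case 0 then show ?case by simp
next
  case (Suc n)
  show ?case
  proof (cases "m = Suc n")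
    case False
    then have "m \<le> n" using Suc.prems by simp
    moreover have "Spos \<omega> (Suc n) \<noteq> 0" using Suc.prems False by simp
    ultimately show ?thesis using Suc by simp
  qed simp
qed

lemma rho_iff: "rho \<omega> k = enat n \<longleftrightarrow> Spos \<omega> n = 0 \<and> cntz \<omega> n = k"
proof (induction k arbitrary: n)
  case 0
  show ?case
  proof
    assume "rho \<omega> 0 = enat n"
    then have "n = 0" by (simp add: zero_enat_def)
    then show "Spos \<omega> n = 0 \<and> cntz \<omega> n = 0" by simp
  next
    assume a: "Spos \<omega> n = 0 \<and> cntz \<omega> n = 0"
    have "n = 0"
    proof (rule ccontr)
      assume "n \<noteq> 0"
      then have "cntz \<omega> 0 < cntz \<omega> n" using a by (intro cntz_strict) auto
      then show False using a by simp
    qed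
    then show "rho \<omega> 0 = enat n" by (simp add: zero_enat_def)
  qed
next
  case (Suc k)
  define Sset where "Sset = {enat m | m. rho \<omega> k < enat m \<and> Spos \<omega> m = 0}"
  have rS: "rho \<omega> (Suc k) = Inf Sset" unfolding Sset_def by simp
  show ?case
  proof
    assume "rho \<omega> (Suc k) = enat n"
    then have I: "Inf Sset = enat n" using rS by simp
    then have ne: "Sset \<noteq> {}" by (auto simp: Inf_enat_def)
    then have "(LEAST x. x \<in> Sset) \<in> Sset" by (metis LeastI equals0I)
    then have nS: "enat n \<in> Sset" using I ne by (simp add: Inf_enat_def)
    then have rk: "rho \<omega> k < enat n" and Sn: "Spos \<omega> n = 0" unfolding Sset_def by auto
    then obtain n' where n': "rho \<omega> k = enat n'" by (cases "rho \<omega> k") auto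
    have nn: "n' < n" using rk n' by simp
    have IH: "Spos \<omega> n' = 0 \<and> cntz \<omega> n' = k" using Suc.IH n' by blast
    have gap: "Spos \<omega> j \<noteq> 0" if "n' < j" "j < n" for j
    proof
      assume "Spos \<omega> j = 0"
      then have "enat j \<in> Sset" unfolding Sset_def using that n' by auto
      then have "Inf Sset \<le> enat j" by (rule Inf_lower)
      then show False using I that by simp
    qed
    obtain n1 where n1: "n = Suc n1" using nn by (cases n) auto
    have "cntz \<omega> n1 = cntz \<omega> n'" using nn n1 gap by (intro cntz_flat) auto
    then show "Spos \<omega> n = 0 \<and> cntz \<omega> n = Suc k" using Sn IH n1 by simp
  next
    assume a: "Spos \<omega> n = 0 \<and> cntz \<omega> n = Suc k"
    have n0: "n \<noteq> 0" using a by (cases n) auto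
    define Z where "Z = {j. j < n \<and> Spos \<omega> j = 0}"
    have Zf: "finite Z" and Z0: "0 \<in> Z" unfolding Z_def using n0 by auto
    define n' where "n' = Max Z"
    have n'Z: "n' \<in> Z" unfolding n'_def using Zf Z0 by (intro Max_in) auto
    have nn: "n' < n" and Sn': "Spos \<omega> n' = 0" using n'Z unfolding Z_def by auto
    have gap: "Spos \<omega> j \<noteq> 0" if "n' < j" "j < n" for j
    proof
      assume "Spos \<omega> j = 0"
      then have "j \<in> Z" unfolding Z_def using that by auto
      then have "j \<le> n'" unfolding n'_def using Zf by simp
      then show False using that by simp
    qed
    obtain n1 where n1: "n = Suc n1" using n0 by (cases n) auto
    have "cntz \<omega> n1 = cntz \<omega> n'" using nn n1 gap by (intro cntz_flat) auto
    then have "cntz \<omega> n' = k" using a n1 by (auto split: if_splits)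
    then have rk: "rho \<omega> k = enat n'" using Suc.IH Sn' by blast
    have "enat n \<in> Sset" unfolding Sset_def using rk nn a by auto
    then have "Inf Sset \<le> enat n" by (rule Inf_lower)
    moreover have "enat n \<le> Inf Sset"
    proof (rule Inf_greatest)
      fix x assume "x \<in> Sset"
      then obtain m where m: "x = enat m" "n' < m" "Spos \<omega> m = 0" unfolding Sset_def using rk by auto
      have "n \<le> m" using gap m by (metis not_le)
      then show "enat n \<le> x" using m by simp
    qed
    ultimately show "rho \<omega> (Suc k) = enat n" using rS by simp
  qed
qed

context rwk
begin

lemma PsiB_True: "(\<lambda>\<tau>. ennreal (PsiB (\<lambda>_. True) \<tau>)) = (\<lambda>\<tau>. ennreal (Psir \<tau>))"
  by (auto simp: PsiB_def Psir_def fun_eq_iff split: prod.splits)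

lemma emeasure_event:
  assumes S: "finite (carrier G)" "\<one>\<^bsub>G\<^esub> \<in> carrier G" and qdef: "q = 1 / real (card (carrier G))"
  shows "emeasure (walk_space p G) {\<omega> \<in> space (walk_space p G). \<exists>n. rho \<omega> k = enat n \<and> is_id_at G \<omega> n}
       = uS (0,0,0,0)"
proof -
  let ?M = "walk_space p G"
  define \<sigma>0 :: fstate where "\<sigma>0 = (0, \<lambda>_. True, 0)"
  define PhiB :: "fstate \<Rightarrow> bool" where "PhiB \<sigma> = (case \<sigma> of (x,B,c) \<Rightarrow> x = 0 \<and> c = k \<and> (\<forall>z. B z))" for \<sigma>
  define En where "En n = {\<omega> \<in> space ?M. PhiB (trajB G \<sigma>0 \<omega> n)}" for n
  have Ph: "PhiB (trajB G \<sigma>0 \<omega> n) \<longleftrightarrow> rho \<omega> k = enat n \<and> is_id_at G \<omega> n" for \<omega> n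
    unfolding \<sigma>0_def traj_defs PhiB_def rho_iff is_id_at_def by (auto simp: fun_eq_iff)
  have E: "{\<omega> \<in> space ?M. \<exists>n. rho \<omega> k = enat n \<and> is_id_at G \<omega> n} = (\<Union>n. En n)"
    unfolding En_def Ph by auto
  have disj: "disjoint_family En"
    unfolding disjoint_family_on_def En_def Ph by auto
  have meas: "En n \<in> sets ?M" for n
  proof -
    have "(\<lambda>\<omega>. PhiB (trajB G \<sigma>0 \<omega> n)) \<in> measurable ?M (count_space UNIV)"
      unfolding walk_space_def by (rule meas_traj) simp
    from measurable_sets[OF this, of "{True}"]
    show ?thesis unfolding En_def by (simp add: vimage_def Int_def conj_commute)
  qed
  have emE: "emeasure ?M (En n) = (KF p q ^^ n) PhiF \<sigma>0" for n
  proof -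
    have "emeasure ?M (En n) = (\<integral>\<^sup>+\<omega>. indicator (En n) \<omega> \<partial>?M)"
      using meas by simp
    also have "\<dots> = (\<integral>\<^sup>+\<omega>. PhiF (trajB G \<sigma>0 \<omega> n) \<partial>?M)"
      by (intro nn_integral_cong) (auto simp: En_def PhiB_def PhiF_def indicator_def split: prod.splits)
    also have "\<dots> = (KF p q ^^ n) PhiF \<sigma>0"
      unfolding qdef by (rule traj_integral[OF S])
    finally show ?thesis .
  qed
  have "emeasure ?M (\<Union>n. En n) = (\<Sum>n. emeasure ?M (En n))"
    using meas disj by (intro suminf_emeasure[symmetric]) auto
  also have "\<dots> = (\<Sum>n. (KS p ^^ n) (\<lambda>\<tau>. ennreal (Psir \<tau>)) (0,0,0,0))"
  proof (intro suminf_cong)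
    fix n show "emeasure ?M (En n) = (KS p ^^ n) (\<lambda>\<tau>. ennreal (Psir \<tau>)) (0,0,0,0)"
    proof (cases n)
      case 0
      then show ?thesis using k1 unfolding emE by (simp add: PhiF_def Psir_def \<sigma>0_def)
    next
      case (Suc n')
      then show ?thesis unfolding emE \<sigma>0_def using claim[of n' 0 "\<lambda>_. True" 0] by (simp add: PsiB_True)
    qed
  qed
  finally show ?thesis unfolding E uS_def .
qed

end


theorem corollary2p6:
  fixes G :: "('a, 'b) monoid_scheme" (structure) and p :: real
  assumes "group G" and "finite (carrier G)" and "card (carrier G) \<ge> 2"
    and "1/2 < p" and "p < 1"
  shows "\<exists>k0::nat. \<exists>c C :: real. 0 < c \<and> c \<le> C \<and>
    (\<forall>k::nat. k \<ge> k0 \<longrightarrow>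
      (let lam = p / (1 - p); alpha = ln (real (card (carrier G))) / ln lam;
           P = measure (walk_space p G)
                 {\<omega> \<in> space (walk_space p G). \<exists>n. rho \<omega> k = enat n \<and> is_id_at G \<omega> n}
       in c / real k powr (2 * alpha) \<le> P \<and> P \<le> C / real k powr (2 * alpha)))"
proof -
  interpret rw p using assms(4,5) by unfold_locales
  define F where "F = real (card (carrier G))"
  have F2: "F \<ge> 2" unfolding F_def using assms(3) by simp
  have Fp: "F > 0" using F2 by simp
  have one: "\<one>\<^bsub>G\<^esub> \<in> carrier G" using assms(1) by (simp add: group.is_monoid monoid.one_closed)
  obtain C where C: "\<And>k::nat. k \<ge> 1 \<Longrightarrow> summable (\<lambda>m. 2 * (1/F)^(2*m+1) * bet m ^ k) \<and>
      (\<Sum>m. 2 * (1/F)^(2*m+1) * bet m ^ k) \<le> C / real k powr (2 * (ln F / ln lam))"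
    using upper_analysis[OF F2] by blast
  define c where "c = exp (-2) / F^5"
  have c0: "c > 0" unfolding c_def using Fp by simp
  have main: "c / real k powr (2 * (ln F / ln lam)) \<le> measure (walk_space p G)
                 {\<omega> \<in> space (walk_space p G). \<exists>n. rho \<omega> k = enat n \<and> is_id_at G \<omega> n} \<and>
              measure (walk_space p G)
                 {\<omega> \<in> space (walk_space p G). \<exists>n. rho \<omega> k = enat n \<and> is_id_at G \<omega> n}
              \<le> max c C / real k powr (2 * (ln F / ln lam))" if k2: "k \<ge> 2" for k
  proof -
    interpret rwk p k "1/F" using k2 F2 by unfold_locales auto
    let ?E = "{\<omega> \<in> space (walk_space p G). \<exists>n. rho \<omega> k = enat n \<and> is_id_at G \<omega> n}"
    have em: "emeasure (walk_space p G) ?E = uS (0,0,0,0)"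
      by (rule emeasure_event[OF assms(2) one]) (simp add: F_def)
    have k1: "k \<ge> 1" using k2 by simp
    have sm: "summable (\<lambda>m. 2 * (1/F)^(2*m+1) * bet m ^ k)" using C[OF k1] by blast
    have nn: "0 \<le> 2 * (1/F)^(2*m+1) * bet m ^ k" for m using Fp bet01[of m] by simp
    have "uS (0,0,0,0) \<le> (\<Sum>m. ennreal (2 * (1/F)^(2*m+1) * bet m ^ k))" by (rule upper_uS)
    also have "\<dots> = ennreal (\<Sum>m. 2 * (1/F)^(2*m+1) * bet m ^ k)"
      using nn sm by (rule suminf_ennreal2)
    finally have up: "uS (0,0,0,0) \<le> ennreal (\<Sum>m. 2 * (1/F)^(2*m+1) * bet m ^ k)" .
    have S0: "0 \<le> (\<Sum>m. 2 * (1/F)^(2*m+1) * bet m ^ k)" using nn sm by (intro suminf_nonneg) auto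
    have fin: "uS (0,0,0,0) < \<top>" using up by (simp add: le_less_trans)
    have "measure (walk_space p G) ?E = enn2real (uS (0,0,0,0))" unfolding measure_def em ..
    also have "\<dots> \<le> (\<Sum>m. 2 * (1/F)^(2*m+1) * bet m ^ k)"
      using up S0 by (simp add: enn2real_leI)
    also have "\<dots> \<le> C / real k powr (2 * (ln F / ln lam))" using C[OF k1] by blast
    also have "\<dots> \<le> max c C / real k powr (2 * (ln F / ln lam))"
      using k2 by (intro divide_right_mono) auto
    finally have U: "measure (walk_space p G) ?E \<le> max c C / real k powr (2 * (ln F / ln lam))" .
    obtain m where m1: "m \<ge> 1" and lm: "c / real k powr (2 * (ln F / ln lam)) \<le> (1/F)^(2*m+1) * gam m ^ k"
      using lower_analysis[OF F2 k2] unfolding c_def by blast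
    have "ennreal ((1/F)^(2*m+1) * gam m ^ k) \<le> uS (0,0,0,0)" by (rule lower_uS[OF m1])
    then have "(1/F)^(2*m+1) * gam m ^ k \<le> enn2real (uS (0,0,0,0))"
      using fin by (metis enn2real_ennreal enn2real_mono gam01(1) zero_le_power Fp
          divide_pos_pos zero_less_one less_imp_le mult_nonneg_nonneg top.not_eq_extremum)
    then have L: "c / real k powr (2 * (ln F / ln lam)) \<le> measure (walk_space p G) ?E"
      using lm unfolding measure_def em by linarith
    show ?thesis using U L by blast
  qed
  show ?thesis
    unfolding Let_def
    apply (rule exI[of _ 2], rule exI[of _ c], rule exI[of _ "max c C"])
    using c0 main unfolding F_def lam_def by auto
qed

end
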